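(* In the model described in the context with full channel state information at the sensors, the antenna gain satisfies $$G_{\rm CSIS}(N)\le \zeta\,\frac{\mathcal{E}_{\rm CSIS}(N)}{\mathcal{E}_{\rm AWGN}(1)}\le \zeta\min\left[\frac{N(z+1)}{Nz+1},\ (z+1)\frac{NK+1}{K+1}\right],$$ where $z:=\gamma_{\rm c}/(p_1\gamma_{\rm s}+1)$.
   Context: Model: $L$ sensors observe $\Theta\in\{0,\theta\}$, $\theta>0$, with prior $P(\Theta=\theta)=p_1\in(0,1)$. Sensor $l$ observes $x_l=\Theta+\eta_l$, $\eta_l\sim\mathcal{CN}(0,\sigma_\eta^2)$ i.i.d., applies a complex gain $\alpha_l$, and transmits over a multiple-access channel to a fusion center with $N$ antennas, receiving $\mathbf{y}=\mathbf{H}\boldsymbol{\alpha}\Theta+\mathbf{H}\mathbf{D}(\boldsymbol{\alpha})\boldsymbol{\eta}+\boldsymbol{\nu}$, where $\mathbf{H}$ is $N\times L$ with i.i.d. entries $h_{nl}=\sqrt{K/(K+1)}+\frac{1}{\sqrt{K+1}}h^{\rm diff}_{nl}$, $h^{\rm diff}_{nl}$ i.i.d. zero-mean with unit second moment, $K\ge0$; $\mathbf{D}(\boldsymbol\alpha)=\mathrm{diag}(\boldsymbol\alpha)$; $\boldsymbol\nu\sim\mathcal{CN}(\mathbf 0,\sigma_\nu^2\mathbf I_N)$ independent of $\boldsymbol\eta$. Let $\mathbf{R}(\boldsymbol{\alpha})=\sigma_\eta^2\mathbf{H}\mathbf{D}(\boldsymbol{\alpha})\mathbf{D}(\boldsymbol{\alpha})^H\mathbf{H}^H+\sigma_\nu^2\mathbf{I}_N$,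 power constraint $\|\boldsymbol\alpha\|^2\le P:=P_T/(p_1\theta^2+\sigma_\eta^2)$, $P_T>0$. Sensing SNR $\gamma_{\rm s}=\theta^2/\sigma_\eta^2$, channel SNR $\gamma_{\rm c}=P_T/\sigma_\nu^2$. With full CSI at the sensors, $\boldsymbol\alpha_{\rm OPT}$ maximizes $\boldsymbol\alpha^H\mathbf{H}^H\mathbf{R}(\boldsymbol\alpha)^{-1}\mathbf{H}\boldsymbol\alpha$ subject to $\|\boldsymbol\alpha\|^2\le P$, and $\mathcal{E}_{\rm CSIS}(N)=\lim_{L\to\infty}\frac{\theta^2}{8}\frac1L\boldsymbol\alpha_{\rm OPT}^H\mathbf{H}^H\mathbf{R}(\boldsymbol\alpha_{\rm OPT})^{-1}\mathbf{H}\boldsymbol\alpha_{\rm OPT}$ (limit in probability); this is the error exponent $\lim_{L\to\infty}-\frac1L\log P_{e|\mathbf H}(N)$ of the Bayesian test at the fusion center. The antenna gain is $G_{\rm CSIS}(N)=\mathcal{E}_{\rm CSIS}(N)/\mathcal{E}_{\rm CSIS}(1)$. Further, $\mathcal{E}_{\rm AWGN}(1)=\frac18\frac{\gamma_{\rm c}\gamma_{\rm s}}{\gamma_{\rm c}+p_1\gamma_{\rm s}+1}$ is the error exponent for $N=1$ with all channels equal to $1$, and $\zeta=(E[|h_{nl}|])^{-2}$. *)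

theory Defs
  imports "HOL-Probability.Probability"
begin

text \<open>Matrices/vectors of varying size are represented as functions on nat,
  only the entries with indices below the stated dimensions matter.
  A channel matrix H (N x L) is H :: nat => nat => complex, H n l for n < N, l < L.\<close>

definition Hvec :: "nat \<Rightarrow> (nat \<Rightarrow> nat \<Rightarrow> complex) \<Rightarrow> (nat \<Rightarrow> complex) \<Rightarrow> nat \<Rightarrow> complex" where
  "Hvec L H \<alpha> n = (\<Sum>l<L. H n l * \<alpha> l)"

text \<open>R(alpha) = s_eta * H D(alpha) D(alpha)^H H^H + s_nu * I_N, with s_eta, s_nu the
  noise variances sigma_eta^2, sigma_nu^2.\<close>
definition Rmat :: "real \<Rightarrow> real \<Rightarrow> nat \<Rightarrow> (nat \<Rightarrow> nat \<Rightarrow> complex) \<Rightarrow> (nat \<Rightarrow> complex)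
    \<Rightarrow> nat \<Rightarrow> nat \<Rightarrow> complex" where
  "Rmat s_eta s_nu L H \<alpha> n m =
     complex_of_real s_eta * (\<Sum>l<L. H n l * \<alpha> l * cnj (\<alpha> l) * cnj (H m l))
     + (if n = m then complex_of_real s_nu else 0)"

definition mat_inv_apply :: "nat \<Rightarrow> (nat \<Rightarrow> nat \<Rightarrow> complex) \<Rightarrow> (nat \<Rightarrow> complex) \<Rightarrow> nat \<Rightarrow> complex" where
  "mat_inv_apply N R v = (THE x. (\<forall>n<N. (\<Sum>m<N. R n m * x m) = v n) \<and> (\<forall>n\<ge>N. x n = 0))"

definition csis_obj :: "nat \<Rightarrow> nat \<Rightarrow> real \<Rightarrow> real \<Rightarrow> (nat \<Rightarrow> nat \<Rightarrow> complex) \<Rightarrow> (nat \<Rightarrow> complex) \<Rightarrow> real" where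
  "csis_obj N L s_eta s_nu H \<alpha> =
     Re (\<Sum>n<N. cnj (Hvec L H \<alpha> n) * mat_inv_apply N (Rmat s_eta s_nu L H \<alpha>) (Hvec L H \<alpha>) n)"

definition csis_opt_value :: "nat \<Rightarrow> nat \<Rightarrow> real \<Rightarrow> real \<Rightarrow> real \<Rightarrow> (nat \<Rightarrow> nat \<Rightarrow> complex) \<Rightarrow> real" where
  "csis_opt_value N L s_eta s_nu P H =
     (SUP \<alpha> \<in> {\<alpha>. (\<Sum>l<L. (cmod (\<alpha> l))\<^sup>2) \<le> P}. csis_obj N L s_eta s_nu H \<alpha>)"

definition conv_in_prob :: "'a measure \<Rightarrow> (nat \<Rightarrow> 'a \<Rightarrow> real) \<Rightarrow> real \<Rightarrow> bool" where
  "conv_in_prob M X c \<longleftrightarrow> (\<forall>L. X L \<in> borel_measurable M) \<and>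
     (\<forall>\<epsilon>>0. (\<lambda>L. measure M {\<omega> \<in> space M. \<bar>X L \<omega> - c\<bar> > \<epsilon>}) \<longlonglongrightarrow> 0)"

end

theory Submission
  imports Defs "Jordan_Normal_Form.Determinant"
begin


lemma cmod_sq_c: "complex_of_real ((cmod z)\<^sup>2) = z * cnj z"
  using complex_norm_square[of z] by simp

lemma quad_form:
  fixes H :: "nat \<Rightarrow> nat \<Rightarrow> complex" and \<alpha> d :: "nat \<Rightarrow> complex"
  shows "(\<Sum>n<N. cnj (d n) * (\<Sum>m<N. Rmat se sn L H \<alpha> n m * d m)) =
     complex_of_real (se * (\<Sum>l<L. (cmod (\<alpha> l))\<^sup>2 * (cmod (\<Sum>n<N. cnj (d n) * H n l))\<^sup>2)
        + sn * (\<Sum>n<N. (cmod (d n))\<^sup>2))"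
proof -
  have a: "(\<Sum>n<N. cnj (d n) * (\<Sum>m<N. Rmat se sn L H \<alpha> n m * d m)) =
     of_real se * (\<Sum>n<N. \<Sum>m<N. \<Sum>l<L. cnj (d n) * H n l * \<alpha> l * cnj (\<alpha> l) * cnj (H m l) * d m)
     + of_real sn * (\<Sum>n<N. cnj (d n) * d n)"
  proof -
    have r: "(\<Sum>m<N. Rmat se sn L H \<alpha> n m * d m) = of_real se * (\<Sum>m<N. \<Sum>l<L. H n l * \<alpha> l * cnj (\<alpha> l) * cnj (H m l) * d m) + of_real sn * d n"
      if "n < N" for n
    proof -
      have "(\<Sum>m<N. Rmat se sn L H \<alpha> n m * d m) = (\<Sum>m<N. of_real se * (\<Sum>l<L. H n l * \<alpha> l * cnj (\<alpha> l) * cnj (H m l) * d m)) + (\<Sum>m<N. (if n = m then of_real sn else 0) * d m)"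
        unfolding Rmat_def by (simp add: ring_distribs sum.distrib sum_distrib_right sum_distrib_left mult.assoc)
      also have "(\<Sum>m<N. (if n = m then of_real sn else 0) * d m) = of_real sn * d n"
        using that by (subst sum.cong[OF refl, of _ _ "\<lambda>m. if n = m then of_real sn * d m else 0"]) (auto simp: sum.delta)
      finally show ?thesis by (simp add: sum_distrib_left)
    qed
    have "(\<Sum>n<N. cnj (d n) * (\<Sum>m<N. Rmat se sn L H \<alpha> n m * d m)) =
       (\<Sum>n<N. cnj (d n) * (of_real se * (\<Sum>m<N. \<Sum>l<L. H n l * \<alpha> l * cnj (\<alpha> l) * cnj (H m l) * d m) + of_real sn * d n))"
      by (rule sum.cong) (auto simp: r)
    also have "\<dots> = of_real se * (\<Sum>n<N. \<Sum>m<N. \<Sum>l<L. cnj (d n) * H n l * \<alpha> l * cnj (\<alpha> l) * cnj (H m l) * d m)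
     + of_real sn * (\<Sum>n<N. cnj (d n) * d n)"
      by (simp add: ring_distribs sum.distrib sum_distrib_left mult_ac)
    finally show ?thesis .
  qed
  have b: "(\<Sum>n<N. \<Sum>m<N. \<Sum>l<L. cnj (d n) * H n l * \<alpha> l * cnj (\<alpha> l) * cnj (H m l) * d m)
     = (\<Sum>l<L. (\<alpha> l * cnj (\<alpha> l)) * ((\<Sum>n<N. cnj (d n) * H n l) * cnj (\<Sum>n<N. cnj (d n) * H n l)))"
  proof -
    have "(\<Sum>l<L. (\<alpha> l * cnj (\<alpha> l)) * ((\<Sum>n<N. cnj (d n) * H n l) * cnj (\<Sum>n<N. cnj (d n) * H n l)))
      = (\<Sum>l<L. \<Sum>n<N. \<Sum>m<N. cnj (d n) * H n l * \<alpha> l * cnj (\<alpha> l) * cnj (H m l) * d m)"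
      by (simp add: sum_distrib_left sum_distrib_right mult_ac)
    also have "\<dots> = (\<Sum>n<N. \<Sum>l<L. \<Sum>m<N. cnj (d n) * H n l * \<alpha> l * cnj (\<alpha> l) * cnj (H m l) * d m)"
      by (rule sum.swap)
    also have "\<dots> = (\<Sum>n<N. \<Sum>m<N. \<Sum>l<L. cnj (d n) * H n l * \<alpha> l * cnj (\<alpha> l) * cnj (H m l) * d m)"
      by (rule sum.cong[OF refl], rule sum.swap)
    finally show ?thesis by simp
  qed
  show ?thesis
    unfolding a b of_real_add of_real_mult of_real_sum cmod_sq_c by (simp add: sum_distrib_left mult.commute)
qed

lemma Rmat_inj:
  assumes se: "se \<ge> 0" and sn: "sn > 0"
    and d: "\<And>n. n < N \<Longrightarrow> (\<Sum>m<N. Rmat se sn L H \<alpha> n m * d m) = 0"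
  shows "\<And>n. n < N \<Longrightarrow> d n = 0"
proof -
  have "complex_of_real (se * (\<Sum>l<L. (cmod (\<alpha> l))\<^sup>2 * (cmod (\<Sum>n<N. cnj (d n) * H n l))\<^sup>2)
        + sn * (\<Sum>n<N. (cmod (d n))\<^sup>2)) = 0"
    unfolding quad_form[symmetric] using d by simp
  then have e: "se * (\<Sum>l<L. (cmod (\<alpha> l))\<^sup>2 * (cmod (\<Sum>n<N. cnj (d n) * H n l))\<^sup>2)
        + sn * (\<Sum>n<N. (cmod (d n))\<^sup>2) = 0" by (simp only: of_real_eq_0_iff)
  have p1: "se * (\<Sum>l<L. (cmod (\<alpha> l))\<^sup>2 * (cmod (\<Sum>n<N. cnj (d n) * H n l))\<^sup>2) \<ge> 0"
    using se by (intro mult_nonneg_nonneg sum_nonneg) auto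
  have p2: "(\<Sum>n<N. (cmod (d n))\<^sup>2) \<ge> 0" by (intro sum_nonneg) auto
  have "(\<Sum>n<N. (cmod (d n))\<^sup>2) = 0"
    using e p1 p2 sn by (smt (verit) mult_pos_pos)
  then have "\<forall>n\<in>{..<N}. (cmod (d n))\<^sup>2 = 0"
    by (subst sum_nonneg_eq_0_iff[symmetric]) auto
  then show "\<And>n. n < N \<Longrightarrow> d n = 0" by auto
qed

lemma Rmat_solvable:
  assumes se: "se \<ge> 0" and sn: "sn > 0"
  shows "\<exists>x. (\<forall>n<N. (\<Sum>m<N. Rmat se sn L H \<alpha> n m * x m) = u n) \<and> (\<forall>n\<ge>N. x n = 0)"
proof -
  define R where "R = Rmat se sn L H \<alpha>"
  define A :: "complex Matrix.mat" where "A = Matrix.mat N N (\<lambda>(i,j). R i j)"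
  have A: "A \<in> carrier_mat N N" unfolding A_def by auto
  have mv: "(A *\<^sub>v v) $ n = (\<Sum>m<N. R n m * v $ m)" if "n < N" "v \<in> carrier_vec N" for v n
    using that unfolding A_def
    by (auto simp: scalar_prod_def atLeast0LessThan intro!: sum.cong)
  have "Determinant.det A \<noteq> 0"
  proof
    assume "Determinant.det A = 0"
    then obtain v where v: "v \<in> carrier_vec N" "v \<noteq> 0\<^sub>v N" "A *\<^sub>v v = 0\<^sub>v N"
      using det_0_iff_vec_prod_zero_field[OF A] by auto
    define d where "d n = (if n < N then v $ n else 0)" for n
    have "(\<Sum>m<N. R n m * d m) = 0" if "n < N" for n
    proof -
      have "(\<Sum>m<N. R n m * d m) = (A *\<^sub>v v) $ n" using mv[OF that v(1)] by (simp add: d_def)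
      also have "\<dots> = 0" using v(3) that by simp
      finally show ?thesis .
    qed
    then have "\<And>n. n < N \<Longrightarrow> d n = 0" using Rmat_inj[OF se sn] unfolding R_def by blast
    then have "v = 0\<^sub>v N" using v(1) by (intro eq_vecI) (auto simp: d_def)
    with v(2) show False by simp
  qed
  from det_non_zero_imp_unit[OF A this, of "()"]
  obtain B where B: "B \<in> carrier_mat N N" "A * B = 1\<^sub>m N"
    unfolding Units_def ring_mat_def by auto
  define w where "w = B *\<^sub>v Matrix.vec N u"
  have w: "w \<in> carrier_vec N" using B unfolding w_def by auto
  have Aw: "A *\<^sub>v w = Matrix.vec N u"
    unfolding w_def using B A by (subst assoc_mult_mat_vec[symmetric]) auto
  define x where "x n = (if n < N then w $ n else 0)" for n
  have "(\<Sum>m<N. R n m * x m) = u n" if "n < N" for n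
  proof -
    have "(\<Sum>m<N. R n m * x m) = (A *\<^sub>v w) $ n" using mv[OF that w] by (simp add: x_def)
    also have "\<dots> = u n" using Aw that by simp
    finally show ?thesis .
  qed
  then show ?thesis unfolding R_def by (intro exI[of _ x]) (auto simp: x_def)
qed

lemma mat_inv_apply_sol:
  assumes se: "se \<ge> 0" and sn: "sn > 0"
  shows "(\<forall>n<N. (\<Sum>m<N. Rmat se sn L H \<alpha> n m * mat_inv_apply N (Rmat se sn L H \<alpha>) u m) = u n)
     \<and> (\<forall>n\<ge>N. mat_inv_apply N (Rmat se sn L H \<alpha>) u n = 0)"
proof -
  have ex1: "\<exists>!x. (\<forall>n<N. (\<Sum>m<N. Rmat se sn L H \<alpha> n m * x m) = u n) \<and> (\<forall>n\<ge>N. x n = 0)"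
  proof (rule ex_ex1I)
    show "\<exists>x. (\<forall>n<N. (\<Sum>m<N. Rmat se sn L H \<alpha> n m * x m) = u n) \<and> (\<forall>n\<ge>N. x n = 0)"
      by (rule Rmat_solvable[OF se sn])
  next
    fix x y
    assume x: "(\<forall>n<N. (\<Sum>m<N. Rmat se sn L H \<alpha> n m * x m) = u n) \<and> (\<forall>n\<ge>N. x n = 0)"
      and y: "(\<forall>n<N. (\<Sum>m<N. Rmat se sn L H \<alpha> n m * y m) = u n) \<and> (\<forall>n\<ge>N. y n = 0)"
    have "(\<Sum>m<N. Rmat se sn L H \<alpha> n m * (x m - y m)) = 0" if "n < N" for n
      using x y that by (simp add: right_diff_distrib sum_subtractf)
    then have "\<And>n. n < N \<Longrightarrow> x n - y n = 0" using Rmat_inj[OF se sn, where d="\<lambda>m. x m - y m"] by blast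
    then show "x = y" using x y by (intro ext) (metis eq_iff_diff_eq_0 not_less)
  qed
  show ?thesis using theI'[OF ex1] unfolding mat_inv_apply_def .
qed

lemma CS_cmod:
  fixes a b :: "nat \<Rightarrow> complex"
  shows "(cmod (\<Sum>i\<in>I. a i * b i))\<^sup>2 \<le> (\<Sum>i\<in>I. (cmod (a i))\<^sup>2) * (\<Sum>i\<in>I. (cmod (b i))\<^sup>2)"
proof -
  have "cmod (\<Sum>i\<in>I. a i * b i) \<le> (\<Sum>i\<in>I. cmod (a i) * cmod (b i))"
    by (rule order_trans[OF norm_sum]) (simp add: norm_mult)
  then have "(cmod (\<Sum>i\<in>I. a i * b i))\<^sup>2 \<le> (\<Sum>i\<in>I. cmod (a i) * cmod (b i))\<^sup>2"
    by (intro power_mono) auto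
  also have "\<dots> \<le> (\<Sum>i\<in>I. (cmod (a i))\<^sup>2) * (\<Sum>i\<in>I. (cmod (b i))\<^sup>2)"
    by (rule Cauchy_Schwarz_ineq_sum)
  finally show ?thesis .
qed

lemma obj_bound:
  assumes se: "se > 0" and sn: "sn > 0" and L: "L > 0"
  shows "0 \<le> csis_obj N L se sn H \<alpha> \<and>
     csis_obj N L se sn H \<alpha> * (se * (\<Sum>n<N. (cmod (Hvec L H \<alpha> n))\<^sup>2) + sn * real L)
       \<le> real L * (\<Sum>n<N. (cmod (Hvec L H \<alpha> n))\<^sup>2)"
proof -
  define u where "u = Hvec L H \<alpha>"
  define x where "x = mat_inv_apply N (Rmat se sn L H \<alpha>) u"
  define U where "U = (\<Sum>n<N. (cmod (u n))\<^sup>2)"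
  define X where "X = (\<Sum>n<N. (cmod (x n))\<^sup>2)"
  define t where "t l = (\<Sum>n<N. cnj (x n) * H n l)" for l
  define S where "S = (\<Sum>l<L. (cmod (\<alpha> l))\<^sup>2 * (cmod (t l))\<^sup>2)"
  define Q where "Q = (\<Sum>n<N. cnj (u n) * x n)"
  have sol: "\<And>n. n < N \<Longrightarrow> (\<Sum>m<N. Rmat se sn L H \<alpha> n m * x m) = u n"
    using mat_inv_apply_sol[of se sn N L H \<alpha> u] se sn unfolding x_def by auto
  have "(\<Sum>n<N. cnj (x n) * u n) = (\<Sum>n<N. cnj (x n) * (\<Sum>m<N. Rmat se sn L H \<alpha> n m * x m))"
    by (rule sum.cong) (auto simp: sol)
  also have "\<dots> = complex_of_real (se * S + sn * X)"
    unfolding quad_form S_def X_def t_def ..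
  finally have q1: "(\<Sum>n<N. cnj (x n) * u n) = complex_of_real (se * S + sn * X)" .
  have QQ: "Q = complex_of_real (se * S + sn * X)"
  proof -
    have "Q = cnj (\<Sum>n<N. cnj (x n) * u n)" unfolding Q_def by (simp add: mult.commute)
    then show ?thesis using q1 by simp
  qed
  have obj: "csis_obj N L se sn H \<alpha> = se * S + sn * X"
    unfolding csis_obj_def using QQ unfolding Q_def u_def x_def by simp
  have S0: "S \<ge> 0" unfolding S_def by (intro sum_nonneg) auto
  have X0: "X \<ge> 0" unfolding X_def by (intro sum_nonneg) auto
  have U0: "U \<ge> 0" unfolding U_def by (intro sum_nonneg) auto
  have q0: "se * S + sn * X \<ge> 0" using S0 X0 se sn by simp
  have Q2: "Q = (\<Sum>l<L. cnj (\<alpha> l) * cnj (t l))"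
    unfolding Q_def u_def Hvec_def t_def
    by (simp add: sum_distrib_left sum_distrib_right mult_ac sum.swap[of _ "{..<N}"])
  have "(se * S + sn * X)\<^sup>2 = (cmod Q)\<^sup>2" unfolding QQ norm_of_real using q0 by simp
  also have "\<dots> = (cmod (\<Sum>l<L. 1 * (cnj (\<alpha> l) * cnj (t l))))\<^sup>2" unfolding Q2 by simp
  also have "\<dots> \<le> (\<Sum>l<L. (cmod (1::complex))\<^sup>2) * (\<Sum>l<L. (cmod (cnj (\<alpha> l) * cnj (t l)))\<^sup>2)"
    by (rule CS_cmod)
  also have "\<dots> = real L * S" unfolding S_def by (simp add: norm_mult power_mult_distrib)
  finally have i1: "(se * S + sn * X)\<^sup>2 \<le> real L * S" .
  have "(se * S + sn * X)\<^sup>2 = (cmod Q)\<^sup>2" unfolding QQ norm_of_real using q0 by simp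
  also have "\<dots> \<le> (\<Sum>n<N. (cmod (cnj (u n)))\<^sup>2) * (\<Sum>n<N. (cmod (x n))\<^sup>2)"
    unfolding Q_def by (rule CS_cmod)
  also have "\<dots> = U * X" unfolding U_def X_def by simp
  finally have i2: "(se * S + sn * X)\<^sup>2 \<le> U * X" .
  define q where "q = se * S + sn * X"
  have key: "q * (se * U + sn * real L) \<le> real L * U"
  proof (cases "q = 0")
    case True then show ?thesis using U0 by simp
  next
    case False
    then have qp: "q > 0" using q0 unfolding q_def by simp
    have "q\<^sup>2 * (se * U + sn * real L) = se * U * q\<^sup>2 + sn * real L * q\<^sup>2" by (simp add: algebra_simps)
    also have "\<dots> \<le> se * U * (real L * S) + sn * real L * (U * X)"
      using i1 i2 se sn U0 unfolding q_def
      by (intro add_mono mult_left_mono) auto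
    also have "\<dots> = real L * U * q" unfolding q_def by (simp add: algebra_simps)
    finally have "q * (q * (se * U + sn * real L)) \<le> q * (real L * U)"
      by (simp add: power2_eq_square mult_ac)
    then show ?thesis using qp by simp
  qed
  show ?thesis using key q0 unfolding obj q_def U_def u_def by simp
qed

lemma U_bound1:
  "(\<Sum>n<N. (cmod (Hvec L H \<alpha> n))\<^sup>2) \<le> (\<Sum>l<L. (cmod (\<alpha> l))\<^sup>2) * (\<Sum>n<N. \<Sum>l<L. (cmod (H n l))\<^sup>2)"
proof -
  have "(\<Sum>n<N. (cmod (Hvec L H \<alpha> n))\<^sup>2) \<le> (\<Sum>n<N. (\<Sum>l<L. (cmod (H n l))\<^sup>2) * (\<Sum>l<L. (cmod (\<alpha> l))\<^sup>2))"
    unfolding Hvec_def by (intro sum_mono CS_cmod)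
  then show ?thesis by (simp add: sum_distrib_left sum_distrib_right mult_ac)
qed

lemma sum_sq_le: "(\<Sum>n<N. (f n::real))\<^sup>2 \<le> real N * (\<Sum>n<N. (f n)\<^sup>2)"
  using Cauchy_Schwarz_ineq_sum[of "\<lambda>_. 1" f "{..<N}"] by simp

lemma U_bound2:
  fixes H :: "nat \<Rightarrow> nat \<Rightarrow> complex" and b e :: real
  assumes b: "b \<ge> 0" and e: "e \<ge> 0"
    and G: "\<And>n m. n < N \<Longrightarrow> m < N \<Longrightarrow> cmod (\<Sum>l<L. cnj (H n l) * H m l) \<le> real L * (b + (if n = m then e else 0))"
  shows "(\<Sum>n<N. (cmod (Hvec L H \<alpha> n))\<^sup>2) \<le> (\<Sum>l<L. (cmod (\<alpha> l))\<^sup>2) * (real L * (real N * b + e))"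
proof -
  define u where "u = Hvec L H \<alpha>"
  define U where "U = (\<Sum>n<N. (cmod (u n))\<^sup>2)"
  define A where "A = (\<Sum>l<L. (cmod (\<alpha> l))\<^sup>2)"
  define s where "s l = (\<Sum>n<N. cnj (H n l) * u n)" for l
  define G where "G n m = (\<Sum>l<L. cnj (H n l) * H m l)" for n m
  have U0: "U \<ge> 0" unfolding U_def by (intro sum_nonneg) auto
  have A0: "A \<ge> 0" unfolding A_def by (intro sum_nonneg) auto
  have e1: "complex_of_real U = (\<Sum>l<L. \<alpha> l * cnj (s l))"
    unfolding U_def of_real_sum cmod_sq_c s_def u_def Hvec_def
    apply (simp add: sum_distrib_left sum_distrib_right mult_ac sum.swap[of _ "{..<N}"])
    apply (rule sum.cong[OF refl])
    apply (rule sum.swap)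
    done
  have "U\<^sup>2 = (cmod (\<Sum>l<L. \<alpha> l * cnj (s l)))\<^sup>2" unfolding e1[symmetric] norm_of_real using U0 by simp
  also have "\<dots> \<le> A * (\<Sum>l<L. (cmod (cnj (s l)))\<^sup>2)" unfolding A_def by (rule CS_cmod)
  finally have i1: "U\<^sup>2 \<le> A * (\<Sum>l<L. (cmod (s l))\<^sup>2)" by simp
  have e2: "complex_of_real (\<Sum>l<L. (cmod (s l))\<^sup>2) = (\<Sum>n<N. \<Sum>m<N. u n * cnj (u m) * G n m)"
    unfolding of_real_sum cmod_sq_c s_def G_def
    apply (simp add: sum_distrib_left sum_distrib_right mult_ac sum.swap[of _ "{..<L}"])
    apply (rule sum.cong[OF refl])
    apply (rule sum.swap)
    done
  have S0: "(\<Sum>l<L. (cmod (s l))\<^sup>2) \<ge> 0" by (intro sum_nonneg) auto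
  have "(\<Sum>l<L. (cmod (s l))\<^sup>2) = cmod (\<Sum>n<N. \<Sum>m<N. u n * cnj (u m) * G n m)"
    unfolding e2[symmetric] norm_of_real using S0 by simp
  also have "\<dots> \<le> (\<Sum>n<N. \<Sum>m<N. cmod (u n) * cmod (u m) * (real L * (b + (if n = m then e else 0))))"
  proof -
    have "cmod (\<Sum>n<N. \<Sum>m<N. u n * cnj (u m) * G n m) \<le> (\<Sum>n<N. cmod (\<Sum>m<N. u n * cnj (u m) * G n m))"
      by (rule norm_sum)
    also have "\<dots> \<le> (\<Sum>n<N. \<Sum>m<N. cmod (u n * cnj (u m) * G n m))"
      by (intro sum_mono norm_sum)
    also have "\<dots> \<le> (\<Sum>n<N. \<Sum>m<N. cmod (u n) * cmod (u m) * (real L * (b + (if n = m then e else 0))))"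
      unfolding norm_mult complex_mod_cnj
      by (intro sum_mono mult_left_mono) (auto simp: G_def G)
    finally show ?thesis .
  qed
  also have "\<dots> = real L * (b * (\<Sum>n<N. cmod (u n))\<^sup>2 + e * U)"
  proof -
    have "(\<Sum>n<N. \<Sum>m<N. cmod (u n) * cmod (u m) * (real L * (b + (if n = m then e else 0))))
      = (\<Sum>n<N. \<Sum>m<N. real L * b * (cmod (u n) * cmod (u m))) + (\<Sum>n<N. \<Sum>m<N. (if n = m then real L * e * (cmod (u n) * cmod (u m)) else 0))"
    proof -
      have "(\<Sum>n<N. \<Sum>m<N. cmod (u n) * cmod (u m) * (real L * (b + (if n = m then e else 0))))
        = (\<Sum>n<N. \<Sum>m<N. real L * b * (cmod (u n) * cmod (u m)) + (if n = m then real L * e * (cmod (u n) * cmod (u m)) else 0))"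
        by (intro sum.cong refl) (simp add: algebra_simps)
      then show ?thesis by (simp only: sum.distrib)
    qed
    also have "\<dots> = real L * b * (\<Sum>n<N. cmod (u n))\<^sup>2 + real L * e * U"
      unfolding U_def power2_eq_square
      by (simp add: sum_distrib_left sum_distrib_right mult_ac sum.delta)
    finally show ?thesis by (simp add: algebra_simps)
  qed
  also have "\<dots> \<le> real L * (b * (real N * U) + e * U)"
    unfolding U_def using b e by (intro mult_left_mono add_mono mult_left_mono sum_sq_le) auto
  finally have i2: "(\<Sum>l<L. (cmod (s l))\<^sup>2) \<le> real L * (real N * b + e) * U" by (simp add: algebra_simps)
  have "U\<^sup>2 \<le> A * (real L * (real N * b + e)) * U"
    using i1 mult_left_mono[OF i2 A0] by (simp add: mult_ac)
  then have "U \<le> A * (real L * (real N * b + e))"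
  proof (cases "U = 0")
    case True then show ?thesis using A0 b e by simp
  next
    case False then have "U > 0" using U0 by simp
    with \<open>U\<^sup>2 \<le> A * (real L * (real N * b + e)) * U\<close> show ?thesis
      by (simp add: power2_eq_square)
  qed
  then show ?thesis unfolding U_def u_def A_def .
qed

lemma obj_le_const:
  assumes se: "se > 0" and sn: "sn > 0" and L: "L > 0"
  shows "csis_obj N L se sn H \<alpha> \<le> real L / se"
proof -
  define U where "U = (\<Sum>n<N. (cmod (Hvec L H \<alpha> n))\<^sup>2)"
  have U0: "U \<ge> 0" unfolding U_def by (intro sum_nonneg) auto
  from obj_bound[OF se sn L, of N H \<alpha>] have o: "0 \<le> csis_obj N L se sn H \<alpha>"
    "csis_obj N L se sn H \<alpha> * (se * U + sn * real L) \<le> real L * U" unfolding U_def by auto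
  have D: "se * U + sn * real L > 0" using se sn L U0 by (simp add: add_nonneg_pos)
  have "real L * U \<le> real L / se * (se * U + sn * real L)"
    using se sn L U0 by (simp add: field_simps)
  then have "csis_obj N L se sn H \<alpha> * (se * U + sn * real L) \<le> real L / se * (se * U + sn * real L)"
    using o(2) by linarith
  then show ?thesis using D by (meson mult_le_cancel_right_pos)
qed

lemma opt_ge:
  assumes se: "se > 0" and sn: "sn > 0" and L: "L > 0"
    and a: "(\<Sum>l<L. (cmod (\<alpha> l))\<^sup>2) \<le> P"
  shows "csis_obj N L se sn H \<alpha> \<le> csis_opt_value N L se sn P H"
  unfolding csis_opt_value_def
  by (rule cSUP_upper) (use a obj_le_const[OF se sn L] in \<open>auto intro!: bdd_aboveI2\<close>)

lemma opt_le:
  assumes se: "se > 0" and sn: "sn > 0" and L: "L > 0" and P: "P \<ge> 0"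
    and B: "\<And>\<alpha>. (\<Sum>l<L. (cmod (\<alpha> l))\<^sup>2) \<le> P \<Longrightarrow> csis_obj N L se sn H \<alpha> \<le> B"
  shows "csis_opt_value N L se sn P H \<le> B"
  unfolding csis_opt_value_def
  by (rule cSUP_least) (use P B in \<open>auto intro!: exI[of _ "\<lambda>_. 0"]\<close>)

lemma opt_nonneg:
  assumes se: "se > 0" and sn: "sn > 0" and L: "L > 0" and P: "P \<ge> 0"
  shows "csis_opt_value N L se sn P H \<ge> 0"
  using opt_ge[OF se sn L, of "\<lambda>_. 0" P N H] obj_bound[OF se sn L, of N H "\<lambda>_. 0"] P by simp

lemma obj_N1:
  assumes se: "se > 0" and sn: "sn > 0"
  shows "csis_obj 1 L se sn H \<alpha> = (cmod (Hvec L H \<alpha> 0))\<^sup>2 /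
     (se * (\<Sum>l<L. (cmod (H 0 l))\<^sup>2 * (cmod (\<alpha> l))\<^sup>2) + sn)"
proof -
  define D where "D = se * (\<Sum>l<L. (cmod (H 0 l))\<^sup>2 * (cmod (\<alpha> l))\<^sup>2) + sn"
  have D0: "D > 0" unfolding D_def using se sn
    by (intro add_nonneg_pos mult_nonneg_nonneg sum_nonneg) auto
  define x where "x = mat_inv_apply 1 (Rmat se sn L H \<alpha>) (Hvec L H \<alpha>)"
  have "Rmat se sn L H \<alpha> 0 0 * x 0 = Hvec L H \<alpha> 0"
    using mat_inv_apply_sol[of se sn 1 L H \<alpha> "Hvec L H \<alpha>"] se sn unfolding x_def by auto
  moreover have "Rmat se sn L H \<alpha> 0 0 = complex_of_real D"
    unfolding Rmat_def D_def of_real_add of_real_mult of_real_sum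
    by (simp only: cmod_sq_c) (simp add: mult_ac)
  ultimately have x0: "x 0 = Hvec L H \<alpha> 0 / complex_of_real D" using D0
    by (simp add: field_simps)
  have "csis_obj 1 L se sn H \<alpha> = Re (cnj (Hvec L H \<alpha> 0) * Hvec L H \<alpha> 0 / complex_of_real D)"
    unfolding csis_obj_def x_def[symmetric] using x0 by simp
  also have "\<dots> = (cmod (Hvec L H \<alpha> 0))\<^sup>2 / D"
    by (simp add: mult.commute[of "cnj _"] complex_norm_square[symmetric] Re_divide_of_real)
  finally show ?thesis unfolding D_def .
qed

lemma mult_cnj_sgn: "z * cnj (sgn z) = complex_of_real (cmod z)"
proof (cases "z = 0")
  case False
  have "z * cnj (sgn z) = z * cnj z / complex_of_real (cmod z)"
    by (simp add: sgn_div_norm divide_inverse scaleR_conv_of_real mult_ac)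
  also have "\<dots> = complex_of_real (cmod z)"
    using False by (simp add: complex_norm_square[symmetric] power2_eq_square)
  finally show ?thesis .
qed simp

lemma opt_N1_lower:
  assumes se: "se > 0" and sn: "sn > 0" and L: "L > 0" and P: "P \<ge> 0"
  shows "P * ((\<Sum>l<L. cmod (H 0 l)) / real L)\<^sup>2 / (se * P * ((\<Sum>l<L. (cmod (H 0 l))\<^sup>2) / real L) + sn)
     \<le> csis_opt_value 1 L se sn P H / real L"
proof -
  define c where "c = sqrt (P / real L)"
  have c0: "c \<ge> 0" unfolding c_def using P by simp
  have c2: "c\<^sup>2 = P / real L" unfolding c_def using P by simp
  define \<alpha> where "\<alpha> l = complex_of_real c * cnj (sgn (H 0 l))" for l
  have na: "cmod (\<alpha> l) = (if H 0 l = 0 then 0 else c)" for l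
    unfolding \<alpha>_def using c0 by (simp add: norm_mult norm_sgn)
  have "(\<Sum>l<L. (cmod (\<alpha> l))\<^sup>2) \<le> (\<Sum>l<L. c\<^sup>2)"
    by (intro sum_mono) (auto simp: na)
  also have "\<dots> = P" using c2 L by simp
  finally have aP: "(\<Sum>l<L. (cmod (\<alpha> l))\<^sup>2) \<le> P" .
  have hv: "Hvec L H \<alpha> 0 = complex_of_real (c * (\<Sum>l<L. cmod (H 0 l)))"
    unfolding Hvec_def \<alpha>_def
    by (simp add: mult.left_commute[of "H 0 _"] mult_cnj_sgn sum_distrib_left)
  have den: "(\<Sum>l<L. (cmod (H 0 l))\<^sup>2 * (cmod (\<alpha> l))\<^sup>2) = c\<^sup>2 * (\<Sum>l<L. (cmod (H 0 l))\<^sup>2)"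
    by (simp add: sum_distrib_left na) (intro sum.cong refl, auto)
  have obj: "csis_obj 1 L se sn H \<alpha> = c\<^sup>2 * (\<Sum>l<L. cmod (H 0 l))\<^sup>2 / (se * (c\<^sup>2 * (\<Sum>l<L. (cmod (H 0 l))\<^sup>2)) + sn)"
    unfolding obj_N1[OF se sn] hv den norm_of_real by (simp add: power_mult_distrib)
  have "P * ((\<Sum>l<L. cmod (H 0 l)) / real L)\<^sup>2 / (se * P * ((\<Sum>l<L. (cmod (H 0 l))\<^sup>2) / real L) + sn)
      = csis_obj 1 L se sn H \<alpha> / real L"
    unfolding obj c2 using L by (simp add: field_simps power2_eq_square)
  also have "\<dots> \<le> csis_opt_value 1 L se sn P H / real L"
    using opt_ge[OF se sn L aP] L by (simp add: divide_right_mono)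
  finally show ?thesis .
qed

lemma obj_le_frac:
  assumes se: "se > 0" and sn: "sn > 0" and L: "L > 0"
  shows "csis_obj N L se sn H \<alpha> \<le> real L * (\<Sum>n<N. (cmod (Hvec L H \<alpha> n))\<^sup>2) /
            (se * (\<Sum>n<N. (cmod (Hvec L H \<alpha> n))\<^sup>2) + sn * real L)"
proof -
  define U where "U = (\<Sum>n<N. (cmod (Hvec L H \<alpha> n))\<^sup>2)"
  have U0: "U \<ge> 0" unfolding U_def by (intro sum_nonneg) auto
  have D: "se * U + sn * real L > 0" using se sn L U0 by (simp add: add_nonneg_pos)
  from obj_bound[OF se sn L, of N H \<alpha>] D show ?thesis
    unfolding U_def[symmetric] by (simp add: pos_le_divide_eq)
qed

lemma Nz_bound_det:
  assumes se: "se > 0" and sn: "sn > 0" and L: "L > 0" and P: "P \<ge> 0" and c0: "c0 \<ge> 0"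
    and H: "(\<Sum>n<N. \<Sum>l<L. (cmod (H n l))\<^sup>2) \<le> real L * c0"
  shows "csis_opt_value N L se sn P H / real L \<le> P * c0 / (se * (P * c0) + sn)"
proof -
  define c where "c = P * c0"
  have c: "c \<ge> 0" unfolding c_def using P c0 by simp
  have "csis_obj N L se sn H \<alpha> \<le> real L * c / (se * c + sn)"
    if a: "(\<Sum>l<L. (cmod (\<alpha> l))\<^sup>2) \<le> P" for \<alpha>
  proof -
    define U where "U = (\<Sum>n<N. (cmod (Hvec L H \<alpha> n))\<^sup>2)"
    have U0: "U \<ge> 0" unfolding U_def by (intro sum_nonneg) auto
    have "U \<le> P * (real L * c0)"
      unfolding U_def using U_bound1[where N=N and L=L and H=H and \<alpha>=\<alpha>] a H P
      by (meson order_trans mult_mono sum_nonneg zero_le_power2 norm_ge_zero)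
    then have Uc: "U \<le> real L * c" unfolding c_def by (simp add: mult_ac)
    have "csis_obj N L se sn H \<alpha> \<le> real L * U / (se * U + sn * real L)"
      using obj_le_frac[OF se sn L] unfolding U_def .
    also have "\<dots> \<le> real L * c / (se * c + sn)"
    proof -
      have d1: "se * U + sn * real L > 0" using se sn L U0 by (simp add: add_nonneg_pos)
      have d2: "se * c + sn > 0" using se sn c by (simp add: add_nonneg_pos)
      have "real L * U * (se * c + sn) \<le> real L * c * (se * U + sn * real L)"
      proof -
        have "real L * U * (se * c + sn) - real L * c * (se * U + sn * real L) = real L * sn * (U - real L * c)"
          by (simp add: algebra_simps)
        also have "\<dots> \<le> 0" using Uc sn L by (simp add: mult_nonpos_nonneg mult_nonneg_nonpos)
        finally show ?thesis by simp
      qed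
      then show ?thesis using d1 d2 by (simp add: divide_le_eq le_divide_eq mult_ac)
    qed
    finally show ?thesis .
  qed
  then have "csis_opt_value N L se sn P H \<le> real L * c / (se * c + sn)"
    by (intro opt_le[OF se sn L P])
  then show ?thesis using L unfolding c_def[symmetric] by (simp add: divide_le_eq mult_ac)
qed

lemma K_bound_det:
  fixes b e :: real
  assumes se: "se > 0" and sn: "sn > 0" and L: "L > 0" and P: "P \<ge> 0" and b: "b \<ge> 0" and e: "e \<ge> 0"
    and G: "\<And>n m. n < N \<Longrightarrow> m < N \<Longrightarrow> cmod (\<Sum>l<L. cnj (H n l) * H m l) \<le> real L * (b + (if n = m then e else 0))"
  shows "csis_opt_value N L se sn P H / real L \<le> P * (real N * b + e) / sn"
proof -
  have "csis_obj N L se sn H \<alpha> \<le> real L * (P * (real N * b + e) / sn)"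
    if a: "(\<Sum>l<L. (cmod (\<alpha> l))\<^sup>2) \<le> P" for \<alpha>
  proof -
    define U where "U = (\<Sum>n<N. (cmod (Hvec L H \<alpha> n))\<^sup>2)"
    have U0: "U \<ge> 0" unfolding U_def by (intro sum_nonneg) auto
    have "U \<le> (\<Sum>l<L. (cmod (\<alpha> l))\<^sup>2) * (real L * (real N * b + e))"
      unfolding U_def by (rule U_bound2[OF b e G])
    also have "\<dots> \<le> P * (real L * (real N * b + e))"
      using a b e by (intro mult_right_mono) auto
    finally have Ub: "U \<le> P * (real L * (real N * b + e))" .
    have "csis_obj N L se sn H \<alpha> \<le> real L * U / (se * U + sn * real L)"
      using obj_le_frac[OF se sn L] unfolding U_def .
    also have "\<dots> \<le> U / sn"
    proof -
      have d1: "se * U + sn * real L > 0" using se sn L U0 by (simp add: add_nonneg_pos)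
      have "real L * U * sn \<le> U * (se * U + sn * real L)" using U0 se by (simp add: algebra_simps)
      then show ?thesis using d1 sn by (simp add: divide_le_eq le_divide_eq mult_ac)
    qed
    also have "\<dots> \<le> real L * (P * (real N * b + e) / sn)"
      using Ub sn by (simp add: divide_right_mono mult_ac)
    finally show ?thesis .
  qed
  then have "csis_opt_value N L se sn P H \<le> real L * (P * (real N * b + e) / sn)"
    by (intro opt_le[OF se sn L P])
  then show ?thesis using L by (simp add: divide_le_eq mult_ac)
qed



lemma (in prob_space) wlln2:
  fixes Y :: "nat \<Rightarrow> 'a \<Rightarrow> real"
  assumes meas: "\<And>l. random_variable borel (Y l)"
    and ident: "\<And>l. distr M borel (Y l) = distr M borel (Y 0)"
    and indep: "\<And>l k. l \<noteq> k \<Longrightarrow> indep_var borel (Y l) borel (Y k)"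
    and sq: "integrable M (\<lambda>\<omega>. (Y 0 \<omega>)\<^sup>2)"
    and eps: "\<epsilon> > 0"
  shows "(\<lambda>L. prob {\<omega>\<in>space M. \<epsilon> \<le> \<bar>(\<Sum>l<L. Y l \<omega>) / real L - expectation (Y 0)\<bar>}) \<longlonglongrightarrow> 0"
proof -
  note [measurable] = meas
  define \<mu> where "\<mu> = expectation (Y 0)"
  define v where "v = expectation (\<lambda>\<omega>. (Y 0 \<omega> - \<mu>)\<^sup>2)"
  have same_int: "integral\<^sup>L M (\<lambda>\<omega>. f (Y l \<omega>)) = integral\<^sup>L M (\<lambda>\<omega>. f (Y 0 \<omega>))"
    if [measurable]: "f \<in> borel_measurable borel" for f :: "real \<Rightarrow> real" and l
  proof -
    have "integral\<^sup>L M (\<lambda>\<omega>. f (Y l \<omega>)) = integral\<^sup>L (distr M borel (Y l)) f"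
      by (rule integral_distr[symmetric]) auto
    also have "\<dots> = integral\<^sup>L (distr M borel (Y 0)) f" by (simp only: ident[of l])
    also have "\<dots> = integral\<^sup>L M (\<lambda>\<omega>. f (Y 0 \<omega>))" by (rule integral_distr) auto
    finally show ?thesis .
  qed
  have same_intgr: "integrable M (\<lambda>\<omega>. f (Y l \<omega>)) \<longleftrightarrow> integrable M (\<lambda>\<omega>. f (Y 0 \<omega>))"
    if [measurable]: "f \<in> borel_measurable borel" for f :: "real \<Rightarrow> real" and l
  proof -
    have "integrable M (\<lambda>\<omega>. f (Y l \<omega>)) \<longleftrightarrow> integrable (distr M borel (Y l)) f"
      by (rule integrable_distr_eq[symmetric]) auto
    also have "\<dots> \<longleftrightarrow> integrable (distr M borel (Y 0)) f" by (simp only: ident[of l])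
    also have "\<dots> \<longleftrightarrow> integrable M (\<lambda>\<omega>. f (Y 0 \<omega>))" by (rule integrable_distr_eq) auto
    finally show ?thesis .
  qed
  have sq_l: "integrable M (\<lambda>\<omega>. (Y l \<omega>)\<^sup>2)" for l
    using same_intgr[of "\<lambda>x. x\<^sup>2" l] sq by simp
  have int_l: "integrable M (Y l)" for l
    using sq_l[of l] by (rule square_integrable_imp_integrable[rotated]) simp
  have mean_l: "expectation (Y l) = \<mu>" for l
    using same_int[of "\<lambda>x. x" l] unfolding \<mu>_def by simp
  define D where "D l \<omega> = Y l \<omega> - \<mu>" for l \<omega>
  have D_meas[measurable]: "D l \<in> borel_measurable M" for l unfolding D_def by measurable
  have intD: "integrable M (D l)" for l unfolding D_def using int_l by simp
  have sqD: "integrable M (\<lambda>\<omega>. D l \<omega> * D l \<omega>)" for l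
    unfolding D_def using sq_l[of l] int_l[of l]
    by (simp add: algebra_simps power2_eq_square)
  have ED: "expectation (D l) = 0" for l
    unfolding D_def using int_l mean_l prob_space by simp
  have ED2: "expectation (\<lambda>\<omega>. D l \<omega> * D l \<omega>) = v" for l
    using same_int[of "\<lambda>x. (x - \<mu>) * (x - \<mu>)" l] unfolding D_def v_def by (simp add: power2_eq_square)
  have indD: "indep_var borel (D l) borel (D k)" if "l \<noteq> k" for l k
    using indep_var_compose[OF indep[OF that], of "\<lambda>x. x - \<mu>" borel "\<lambda>x. x - \<mu>" borel]
    unfolding D_def comp_def by simp
  have crossD: "expectation (\<lambda>\<omega>. D l \<omega> * D k \<omega>) = (if l = k then v else 0)" for l k
    using indep_var_lebesgue_integral[OF indD intD intD] ED ED2 by auto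
  have intcross: "integrable M (\<lambda>\<omega>. D l \<omega> * D k \<omega>)" for l k
    using indep_var_integrable[OF indD intD intD] sqD by (cases "l = k") auto
  have bound: "prob {\<omega>\<in>space M. \<epsilon> \<le> \<bar>(\<Sum>l<L. Y l \<omega>) / real L - \<mu>\<bar>} \<le> v / (real L * \<epsilon>\<^sup>2)"
    if L: "L > 0" for L
  proof -
    define f where "f \<omega> = (\<Sum>l<L. Y l \<omega>) / real L" for \<omega>
    have f_meas[measurable]: "random_variable borel f" unfolding f_def by measurable
    have fD: "f \<omega> - \<mu> = (\<Sum>l<L. D l \<omega>) / real L" for \<omega>
      unfolding f_def D_def using L by (simp add: sum_subtractf field_simps)
    have fsq: "(f \<omega> - \<mu>)\<^sup>2 = (\<Sum>l<L. \<Sum>k<L. D l \<omega> * D k \<omega>) / (real L)\<^sup>2" for \<omega>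
      unfolding fD by (simp add: power_divide power2_eq_square sum_product)
    have int_fsq: "integrable M (\<lambda>\<omega>. (f \<omega> - \<mu>)\<^sup>2)"
      unfolding fsq by (intro integrable_divide Bochner_Integration.integrable_sum intcross)
    have int_f2: "integrable M (\<lambda>\<omega>. f \<omega> ^ 2)"
    proof -
      have "integrable M (\<lambda>\<omega>. (f \<omega> - \<mu>)\<^sup>2 + 2 * \<mu> * (f \<omega> - \<mu>) + \<mu>\<^sup>2)"
        using int_fsq unfolding fD
        by (intro Bochner_Integration.integrable_add integrable_mult_right integrable_divide Bochner_Integration.integrable_sum intD) auto
      moreover have "(\<lambda>\<omega>. (f \<omega> - \<mu>)\<^sup>2 + 2 * \<mu> * (f \<omega> - \<mu>) + \<mu>\<^sup>2) = (\<lambda>\<omega>. f \<omega> ^ 2)"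
        by (auto simp: power2_eq_square algebra_simps)
      ultimately show ?thesis by simp
    qed
    have Ef: "expectation f = \<mu>"
      unfolding f_def using mean_l int_l L by (simp add: Bochner_Integration.integral_sum)
    have var: "variance f = v / real L"
    proof -
      have "variance f = expectation (\<lambda>\<omega>. (\<Sum>l<L. \<Sum>k<L. D l \<omega> * D k \<omega>) / (real L)\<^sup>2)"
        unfolding Ef fsq ..
      also have "\<dots> = (\<Sum>l<L. \<Sum>k<L. expectation (\<lambda>\<omega>. D l \<omega> * D k \<omega>)) / (real L)\<^sup>2"
        using intcross by (simp add: Bochner_Integration.integral_sum Bochner_Integration.integrable_sum)
      also have "\<dots> = (\<Sum>l<L. \<Sum>k<L. (if l = k then v else 0)) / (real L)\<^sup>2"
        by (simp only: crossD)
      also have "\<dots> = v / real L" using L by (simp add: power2_eq_square)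
      finally show ?thesis .
    qed
    have "prob {\<omega>\<in>space M. \<bar>f \<omega> - expectation f\<bar> \<ge> \<epsilon>} \<le> variance f / \<epsilon>\<^sup>2"
      by (rule Chebyshev_inequality[OF f_meas int_f2 eps])
    then have "prob {\<omega>\<in>space M. \<bar>f \<omega> - expectation f\<bar> \<ge> \<epsilon>} \<le> (v / real L) / \<epsilon>\<^sup>2"
      by (simp only: var)
    then have "prob {\<omega>\<in>space M. \<bar>f \<omega> - \<mu>\<bar> \<ge> \<epsilon>} \<le> (v / real L) / \<epsilon>\<^sup>2"
      by (simp only: Ef)
    then show ?thesis unfolding f_def by (simp add: divide_divide_eq_left)
  qed
  have lim: "(\<lambda>L. v / (real L * \<epsilon>\<^sup>2)) \<longlonglongrightarrow> 0"
  proof -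
    have "(\<lambda>L. (v / \<epsilon>\<^sup>2) * inverse (real L)) \<longlonglongrightarrow> (v / \<epsilon>\<^sup>2) * 0"
      by (intro tendsto_mult tendsto_const lim_inverse_n)
    moreover have "(\<lambda>L. v / (real L * \<epsilon>\<^sup>2)) = (\<lambda>L. (v / \<epsilon>\<^sup>2) * inverse (real L))"
      by (rule ext) (simp add: divide_inverse)
    ultimately show ?thesis by simp
  qed
  show ?thesis unfolding \<mu>_def[symmetric]
  proof (rule tendsto_sandwich[OF _ _ tendsto_const lim])
    show "\<forall>\<^sub>F L in sequentially. 0 \<le> prob {\<omega>\<in>space M. \<epsilon> \<le> \<bar>(\<Sum>l<L. Y l \<omega>) / real L - \<mu>\<bar>}" by simp
    show "\<forall>\<^sub>F L in sequentially. prob {\<omega>\<in>space M. \<epsilon> \<le> \<bar>(\<Sum>l<L. Y l \<omega>) / real L - \<mu>\<bar>} \<le> v / (real L * \<epsilon>\<^sup>2)"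
      using eventually_gt_at_top[of "0::nat"] by (rule eventually_mono) (rule bound)
  qed
qed

lemma (in prob_space) wlln1_upper:
  fixes Y :: "nat \<Rightarrow> 'a \<Rightarrow> real"
  assumes meas: "\<And>l. random_variable borel (Y l)"
    and ident: "\<And>l. distr M borel (Y l) = distr M borel (Y 0)"
    and indep: "\<And>l k. l \<noteq> k \<Longrightarrow> indep_var borel (Y l) borel (Y k)"
    and nonneg: "\<And>l \<omega>. \<omega> \<in> space M \<Longrightarrow> Y l \<omega> \<ge> 0"
    and int0: "integrable M (Y 0)"
    and eps: "\<epsilon> > 0"
  shows "(\<lambda>L. prob {\<omega>\<in>space M. (\<Sum>l<L. Y l \<omega>) / real L > expectation (Y 0) + \<epsilon>}) \<longlonglongrightarrow> 0"
proof -
  note [measurable] = meas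
  define \<mu> where "\<mu> = expectation (Y 0)"
  have same_int: "integral\<^sup>L M (\<lambda>\<omega>. f (Y l \<omega>)) = integral\<^sup>L M (\<lambda>\<omega>. f (Y 0 \<omega>))"
    if [measurable]: "f \<in> borel_measurable borel" for f :: "real \<Rightarrow> real" and l
  proof -
    have "integral\<^sup>L M (\<lambda>\<omega>. f (Y l \<omega>)) = integral\<^sup>L (distr M borel (Y l)) f"
      by (rule integral_distr[symmetric]) auto
    also have "\<dots> = integral\<^sup>L (distr M borel (Y 0)) f" by (simp only: ident[of l])
    also have "\<dots> = integral\<^sup>L M (\<lambda>\<omega>. f (Y 0 \<omega>))" by (rule integral_distr) auto
    finally show ?thesis .
  qed
  have same_intgr: "integrable M (\<lambda>\<omega>. f (Y l \<omega>)) \<longleftrightarrow> integrable M (\<lambda>\<omega>. f (Y 0 \<omega>))"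
    if [measurable]: "f \<in> borel_measurable borel" for f :: "real \<Rightarrow> real" and l
  proof -
    have "integrable M (\<lambda>\<omega>. f (Y l \<omega>)) \<longleftrightarrow> integrable (distr M borel (Y l)) f"
      by (rule integrable_distr_eq[symmetric]) auto
    also have "\<dots> \<longleftrightarrow> integrable (distr M borel (Y 0)) f" by (simp only: ident[of l])
    also have "\<dots> \<longleftrightarrow> integrable M (\<lambda>\<omega>. f (Y 0 \<omega>))" by (rule integrable_distr_eq) auto
    finally show ?thesis .
  qed
  have int_l: "integrable M (Y l)" for l using same_intgr[of "\<lambda>x. x" l] int0 by simp
  have mean_l: "expectation (Y l) = \<mu>" for l using same_int[of "\<lambda>x. x" l] unfolding \<mu>_def by simp
  define Z where "Z T l \<omega> = min (Y l \<omega>) T" for T :: real and l \<omega>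
  define muZ where "muZ T = expectation (Z T 0)" for T
  define e where "e T = \<mu> - muZ T" for T
  have Z_meas[measurable]: "Z T l \<in> borel_measurable M" for T l unfolding Z_def by measurable
  have Z_int: "integrable M (Z T l)" for T l
  proof -
    have "integrable M (\<lambda>\<omega>. min (Y l \<omega>) T)"
      using int_l[of l] by (intro integrable_min) auto
    then show ?thesis unfolding Z_def .
  qed
  have EZ: "expectation (Z T l) = muZ T" for T l
    unfolding Z_def muZ_def using same_int[of "\<lambda>x. min x T" l] by simp
  have markov: "prob {\<omega>\<in>space M. \<epsilon> / 2 \<le> (\<Sum>l<L. Y l \<omega> - Z T l \<omega>) / real L} \<le> e T / (\<epsilon> / 2)"
    if L: "L > 0" for L T
  proof -
    have int: "integrable M (\<lambda>\<omega>. (\<Sum>l<L. Y l \<omega> - Z T l \<omega>) / real L)"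
      using int_l Z_int by (intro integrable_divide Bochner_Integration.integrable_sum Bochner_Integration.integrable_diff) auto
    have nn: "AE \<omega> in M. 0 \<le> (\<Sum>l<L. Y l \<omega> - Z T l \<omega>) / real L"
      unfolding Z_def by (intro AE_I2 divide_nonneg_nonneg sum_nonneg) auto
    have E: "expectation (\<lambda>\<omega>. (\<Sum>l<L. Y l \<omega> - Z T l \<omega>) / real L) = e T"
      using int_l Z_int L unfolding e_def
      by (simp add: Bochner_Integration.integral_sum Bochner_Integration.integral_diff mean_l EZ)
    show ?thesis
      using integral_Markov_inequality_measure[OF int sets.top nn, of "\<epsilon> / 2"] eps unfolding E by simp
  qed
  have e_lim: "(\<lambda>m. e (real m)) \<longlonglongrightarrow> 0"
  proof -
    have "(\<lambda>m. integral\<^sup>L M (\<lambda>\<omega>. Y 0 \<omega> - min (Y 0 \<omega>) (real m))) \<longlonglongrightarrow> integral\<^sup>L M (\<lambda>\<omega>. 0)"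
    proof (rule integral_dominated_convergence[where w="Y 0"])
      show "AE \<omega> in M. (\<lambda>m. Y 0 \<omega> - min (Y 0 \<omega>) (real m)) \<longlonglongrightarrow> 0"
      proof (rule AE_I2)
        fix \<omega> assume "\<omega> \<in> space M"
        have "\<forall>\<^sub>F m in sequentially. Y 0 \<omega> - min (Y 0 \<omega>) (real m) = 0"
          using eventually_ge_at_top[of "nat \<lceil>Y 0 \<omega>\<rceil>"]
          by (rule eventually_mono) (metis real_nat_ceiling_ge of_nat_le_iff order_trans min.absorb1 diff_self)
        then show "(\<lambda>m. Y 0 \<omega> - min (Y 0 \<omega>) (real m)) \<longlonglongrightarrow> 0"
          by (rule tendsto_eventually)
      qed
      show "AE \<omega> in M. norm (Y 0 \<omega> - min (Y 0 \<omega>) (real m)) \<le> Y 0 \<omega>" for m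
        using nonneg by (intro AE_I2) (auto simp: min_def)
    qed (use int0 in auto)
    moreover have "integral\<^sup>L M (\<lambda>\<omega>. Y 0 \<omega> - min (Y 0 \<omega>) (real m)) = e (real m)" for m
      using int0 Z_int[of "real m" 0] unfolding e_def \<mu>_def Z_def muZ_def
      by (simp add: Bochner_Integration.integral_diff)
    ultimately show ?thesis by simp
  qed
  show ?thesis unfolding \<mu>_def[symmetric] tendsto_iff dist_real_def
  proof (intro allI impI)
    fix \<eta> :: real assume \<eta>: "\<eta> > 0"
    from e_lim have "\<forall>\<^sub>F m in sequentially. e (real m) < \<eta> * \<epsilon> / 4"
      using \<eta> eps by (intro order_tendstoD) auto
    then obtain m where m: "e (real m) < \<eta> * \<epsilon> / 4" by (meson eventually_sequentially order_refl)
    define T where "T = real m"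
    have T0: "T \<ge> 0" unfolding T_def by simp
    have Zb: "integrable M (\<lambda>\<omega>. (Z T 0 \<omega>)\<^sup>2)"
    proof (rule integrable_const_bound[where B="T\<^sup>2"])
      show "AE \<omega> in M. norm ((Z T 0 \<omega>)\<^sup>2) \<le> T\<^sup>2"
        using nonneg T0 by (intro AE_I2) (auto simp: Z_def min_def intro!: power_mono)
    qed simp
    have Zident: "distr M borel (Z T l) = distr M borel (Z T 0)" for l
    proof -
      have "distr M borel (Z T l) = distr (distr M borel (Y l)) borel (\<lambda>x. min x T)"
        unfolding Z_def by (subst distr_distr) (auto simp: comp_def)
      also have "\<dots> = distr (distr M borel (Y 0)) borel (\<lambda>x. min x T)" by (simp only: ident[of l])
      also have "\<dots> = distr M borel (Z T 0)"
        unfolding Z_def by (subst distr_distr) (auto simp: comp_def)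
      finally show ?thesis .
    qed
    have Zindep: "indep_var borel (Z T l) borel (Z T k)" if "l \<noteq> k" for l k
      using indep_var_compose[OF indep[OF that], of "\<lambda>x. min x T" borel "\<lambda>x. min x T" borel]
      unfolding Z_def comp_def by simp
    have w2: "(\<lambda>L. prob {\<omega>\<in>space M. \<epsilon> / 2 \<le> \<bar>(\<Sum>l<L. Z T l \<omega>) / real L - expectation (Z T 0)\<bar>}) \<longlonglongrightarrow> 0"
      by (rule wlln2[where Y="Z T", OF Z_meas Zident Zindep Zb]) (use eps in auto)
    then have ev: "\<forall>\<^sub>F L in sequentially. prob {\<omega>\<in>space M. \<epsilon> / 2 \<le> \<bar>(\<Sum>l<L. Z T l \<omega>) / real L - expectation (Z T 0)\<bar>} < \<eta> / 2"
      using \<eta> by (intro order_tendstoD) auto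
    show "\<forall>\<^sub>F L in sequentially. \<bar>prob {\<omega>\<in>space M. \<mu> + \<epsilon> < (\<Sum>l<L. Y l \<omega>) / real L} - 0\<bar> < \<eta>"
      using ev eventually_gt_at_top[of "0::nat"]
    proof eventually_elim
      case (elim L)
      have sub: "{\<omega>\<in>space M. \<mu> + \<epsilon> < (\<Sum>l<L. Y l \<omega>) / real L} \<subseteq>
          {\<omega>\<in>space M. \<epsilon> / 2 \<le> \<bar>(\<Sum>l<L. Z T l \<omega>) / real L - expectation (Z T 0)\<bar>}
          \<union> {\<omega>\<in>space M. \<epsilon> / 2 \<le> (\<Sum>l<L. Y l \<omega> - Z T l \<omega>) / real L}"
      proof safe
        fix \<omega> assume w: "\<omega> \<in> space M" "\<mu> + \<epsilon> < (\<Sum>l<L. Y l \<omega>) / real L"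
          and n: "\<not> \<epsilon> / 2 \<le> (\<Sum>l<L. Y l \<omega> - Z T l \<omega>) / real L"
        have "(\<Sum>l<L. Y l \<omega> - Z T l \<omega>) / real L = (\<Sum>l<L. Y l \<omega>) / real L - (\<Sum>l<L. Z T l \<omega>) / real L"
          by (simp add: sum_subtractf diff_divide_distrib)
        moreover have "expectation (Z T 0) \<le> \<mu>"
          unfolding \<mu>_def Z_def using Z_int[of T 0] int0 by (intro integral_mono) (auto simp: Z_def)
        ultimately show "\<epsilon> / 2 \<le> \<bar>(\<Sum>l<L. Z T l \<omega>) / real L - expectation (Z T 0)\<bar>"
          using w n by linarith
      qed
      have "prob {\<omega>\<in>space M. \<mu> + \<epsilon> < (\<Sum>l<L. Y l \<omega>) / real L} \<le>
          prob ({\<omega>\<in>space M. \<epsilon> / 2 \<le> \<bar>(\<Sum>l<L. Z T l \<omega>) / real L - expectation (Z T 0)\<bar>}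
          \<union> {\<omega>\<in>space M. \<epsilon> / 2 \<le> (\<Sum>l<L. Y l \<omega> - Z T l \<omega>) / real L})"
        by (rule finite_measure_mono[OF sub]) measurable
      also have "\<dots> \<le> prob {\<omega>\<in>space M. \<epsilon> / 2 \<le> \<bar>(\<Sum>l<L. Z T l \<omega>) / real L - expectation (Z T 0)\<bar>}
          + prob {\<omega>\<in>space M. \<epsilon> / 2 \<le> (\<Sum>l<L. Y l \<omega> - Z T l \<omega>) / real L}"
        by (rule measure_Un_le) measurable
      also have "\<dots> < \<eta> / 2 + \<eta> / 2"
      proof (rule add_less_le_mono)
        show "prob {\<omega>\<in>space M. \<epsilon> / 2 \<le> \<bar>(\<Sum>l<L. Z T l \<omega>) / real L - expectation (Z T 0)\<bar>} < \<eta> / 2"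
          using elim by simp
        have "prob {\<omega>\<in>space M. \<epsilon> / 2 \<le> (\<Sum>l<L. Y l \<omega> - Z T l \<omega>) / real L} \<le> e T / (\<epsilon> / 2)"
          using markov elim by simp
        also have "\<dots> \<le> \<eta> / 2"
          using m eps unfolding T_def by (simp add: field_simps)
        finally show "prob {\<omega>\<in>space M. \<epsilon> / 2 \<le> (\<Sum>l<L. Y l \<omega> - Z T l \<omega>) / real L} \<le> \<eta> / 2" .
      qed
      finally show ?case by simp
    qed
  qed
qed

lemma sum_tendsto_zero_contra:
  fixes p q :: "nat \<Rightarrow> real"
  assumes "p \<longlonglongrightarrow> 0" "q \<longlonglongrightarrow> 0" "\<And>L. 1 \<le> p L + q L"
  shows False
proof -
  have "(\<lambda>L. p L + q L) \<longlonglongrightarrow> 0 + 0" by (intro tendsto_add assms)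
  then have "\<forall>\<^sub>F L in sequentially. p L + q L < 1" by (intro order_tendstoD) auto
  then obtain L where "p L + q L < 1" by (meson eventually_sequentially order_refl)
  with assms(3)[of L] show False by simp
qed

lemma conv_upper:
  fixes X :: "nat \<Rightarrow> 'a \<Rightarrow> real" and F :: "real \<Rightarrow> real"
  assumes M: "prob_space M" and conv: "conv_in_prob M X c"
    and F: "(F \<longlongrightarrow> F0) (at_right 0)"
    and bad: "\<And>\<delta>. \<delta> > 0 \<Longrightarrow> (\<lambda>L. measure M {\<omega>\<in>space M. X L \<omega> > F \<delta>}) \<longlonglongrightarrow> 0"
  shows "c \<le> F0"
proof (rule ccontr)
  interpret prob_space M by (rule M)
  assume "\<not> c \<le> F0"
  define \<gamma> where "\<gamma> = (c - F0) / 2"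
  have g: "\<gamma> > 0" using \<open>\<not> c \<le> F0\<close> unfolding \<gamma>_def by simp
  have "\<forall>\<^sub>F \<delta> in at_right 0. F \<delta> < F0 + \<gamma>" using F g by (intro order_tendstoD) auto
  then obtain b where b: "b > 0" "\<And>y. y > 0 \<Longrightarrow> y < b \<Longrightarrow> F y < F0 + \<gamma>"
    unfolding eventually_at_right_field by auto
  define \<delta> where "\<delta> = b / 2"
  have d: "\<delta> > 0" "F \<delta> < F0 + \<gamma>" using b unfolding \<delta>_def by auto
  have meas[measurable]: "X L \<in> borel_measurable M" for L using conv unfolding conv_in_prob_def by auto
  have c1: "(\<lambda>L. measure M {\<omega>\<in>space M. \<bar>X L \<omega> - c\<bar> > \<gamma>}) \<longlonglongrightarrow> 0"
    using conv g unfolding conv_in_prob_def by auto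
  show False
  proof (rule sum_tendsto_zero_contra[OF bad[OF d(1)] c1])
    fix L
    have "space M \<subseteq> {\<omega>\<in>space M. X L \<omega> > F \<delta>} \<union> {\<omega>\<in>space M. \<bar>X L \<omega> - c\<bar> > \<gamma>}"
      using d(2) \<open>\<not> c \<le> F0\<close> unfolding \<gamma>_def by (auto simp: abs_real_def field_simps split: if_splits)
    then have "measure M (space M) \<le> measure M ({\<omega>\<in>space M. X L \<omega> > F \<delta>} \<union> {\<omega>\<in>space M. \<bar>X L \<omega> - c\<bar> > \<gamma>})"
      by (intro finite_measure_mono) measurable
    also have "\<dots> \<le> measure M {\<omega>\<in>space M. X L \<omega> > F \<delta>} + measure M {\<omega>\<in>space M. \<bar>X L \<omega> - c\<bar> > \<gamma>}"
      by (rule measure_Un_le) measurable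
    finally show "1 \<le> measure M {\<omega>\<in>space M. X L \<omega> > F \<delta>} + measure M {\<omega>\<in>space M. \<bar>X L \<omega> - c\<bar> > \<gamma>}"
      by (simp add: prob_space)
  qed
qed

lemma conv_lower:
  fixes X :: "nat \<Rightarrow> 'a \<Rightarrow> real" and F :: "real \<Rightarrow> real"
  assumes M: "prob_space M" and conv: "conv_in_prob M X c"
    and F: "(F \<longlongrightarrow> F0) (at_right 0)"
    and bad: "\<And>\<delta>. \<delta> > 0 \<Longrightarrow> (\<lambda>L. measure M {\<omega>\<in>space M. X L \<omega> < F \<delta>}) \<longlonglongrightarrow> 0"
  shows "F0 \<le> c"
proof (rule ccontr)
  interpret prob_space M by (rule M)
  assume "\<not> F0 \<le> c"
  define \<gamma> where "\<gamma> = (F0 - c) / 2"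
  have g: "\<gamma> > 0" using \<open>\<not> F0 \<le> c\<close> unfolding \<gamma>_def by simp
  have "\<forall>\<^sub>F \<delta> in at_right 0. F \<delta> > F0 - \<gamma>" using F g by (intro order_tendstoD) auto
  then obtain b where b: "b > 0" "\<And>y. y > 0 \<Longrightarrow> y < b \<Longrightarrow> F y > F0 - \<gamma>"
    unfolding eventually_at_right_field by auto
  define \<delta> where "\<delta> = b / 2"
  have d: "\<delta> > 0" "F \<delta> > F0 - \<gamma>" using b unfolding \<delta>_def by auto
  have meas[measurable]: "X L \<in> borel_measurable M" for L using conv unfolding conv_in_prob_def by auto
  have c1: "(\<lambda>L. measure M {\<omega>\<in>space M. \<bar>X L \<omega> - c\<bar> > \<gamma>}) \<longlonglongrightarrow> 0"
    using conv g unfolding conv_in_prob_def by auto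
  show False
  proof (rule sum_tendsto_zero_contra[OF bad[OF d(1)] c1])
    fix L
    have "space M \<subseteq> {\<omega>\<in>space M. X L \<omega> < F \<delta>} \<union> {\<omega>\<in>space M. \<bar>X L \<omega> - c\<bar> > \<gamma>}"
      using d(2) \<open>\<not> F0 \<le> c\<close> unfolding \<gamma>_def by (auto simp: abs_real_def field_simps split: if_splits)
    then have "measure M (space M) \<le> measure M ({\<omega>\<in>space M. X L \<omega> < F \<delta>} \<union> {\<omega>\<in>space M. \<bar>X L \<omega> - c\<bar> > \<gamma>})"
      by (intro finite_measure_mono) measurable
    also have "\<dots> \<le> measure M {\<omega>\<in>space M. X L \<omega> < F \<delta>} + measure M {\<omega>\<in>space M. \<bar>X L \<omega> - c\<bar> > \<gamma>}"
      by (rule measure_Un_le) measurable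
    finally show "1 \<le> measure M {\<omega>\<in>space M. X L \<omega> < F \<delta>} + measure M {\<omega>\<in>space M. \<bar>X L \<omega> - c\<bar> > \<gamma>}"
      by (simp add: prob_space)
  qed
qed



locale chan = prob_space M for M :: "'a measure" +
  fixes hdiff :: "nat \<times> nat \<Rightarrow> 'a \<Rightarrow> complex" and K :: real
  assumes K: "K \<ge> 0"
    and hd_rv[measurable]: "\<And>i. hdiff i \<in> borel_measurable M"
    and hd_indep: "indep_vars (\<lambda>_. borel) hdiff UNIV"
    and hd_ident: "\<And>i. distr M borel (hdiff i) = distr M borel (hdiff (0, 0))"
    and hd_mean: "integrable M (hdiff (0, 0))" "integral\<^sup>L M (hdiff (0, 0)) = 0"
    and hd_var: "integrable M (\<lambda>\<omega>. (cmod (hdiff (0, 0) \<omega>))\<^sup>2)"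
                "integral\<^sup>L M (\<lambda>\<omega>. (cmod (hdiff (0, 0) \<omega>))\<^sup>2) = 1"
begin

definition hf :: "complex \<Rightarrow> complex" where
  "hf z = complex_of_real (sqrt (K / (K + 1))) + z / complex_of_real (sqrt (K + 1))"

definition hv :: "nat \<times> nat \<Rightarrow> 'a \<Rightarrow> complex" where
  "hv i \<omega> = hf (hdiff i \<omega>)"

definition a0 :: real where "a0 = sqrt (K / (K + 1))"

lemma cnj_meas[measurable]: "cnj \<in> borel_measurable borel"
  by (intro borel_measurable_continuous_onI continuous_intros)

lemma hf_meas[measurable]: "hf \<in> borel_measurable borel"
  unfolding hf_def by measurable

lemma hv_meas[measurable]: "hv i \<in> borel_measurable M"
  unfolding hv_def by measurable

lemma a0_sq: "a0\<^sup>2 = K / (K + 1)"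
  unfolding a0_def using K by simp

lemma a0_nonneg: "a0 \<ge> 0" unfolding a0_def using K by simp

lemma a0_sq_le1: "a0\<^sup>2 \<le> 1" unfolding a0_sq using K by simp

lemma hd_same_int:
  fixes f :: "complex \<Rightarrow> 'b::{banach, second_countable_topology}"
  assumes [measurable]: "f \<in> borel_measurable borel"
  shows "integral\<^sup>L M (\<lambda>\<omega>. f (hdiff i \<omega>)) = integral\<^sup>L M (\<lambda>\<omega>. f (hdiff (0,0) \<omega>))"
proof -
  have "integral\<^sup>L M (\<lambda>\<omega>. f (hdiff i \<omega>)) = integral\<^sup>L (distr M borel (hdiff i)) f"
    by (rule integral_distr[symmetric]) auto
  also have "\<dots> = integral\<^sup>L (distr M borel (hdiff (0,0))) f" by (simp only: hd_ident[of i])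
  also have "\<dots> = integral\<^sup>L M (\<lambda>\<omega>. f (hdiff (0,0) \<omega>))" by (rule integral_distr) auto
  finally show ?thesis .
qed

lemma hd_same_intgr:
  fixes f :: "complex \<Rightarrow> 'b::{banach, second_countable_topology}"
  assumes [measurable]: "f \<in> borel_measurable borel"
  shows "integrable M (\<lambda>\<omega>. f (hdiff i \<omega>)) \<longleftrightarrow> integrable M (\<lambda>\<omega>. f (hdiff (0,0) \<omega>))"
proof -
  have "integrable M (\<lambda>\<omega>. f (hdiff i \<omega>)) \<longleftrightarrow> integrable (distr M borel (hdiff i)) f"
    by (rule integrable_distr_eq[symmetric]) auto
  also have "\<dots> \<longleftrightarrow> integrable (distr M borel (hdiff (0,0))) f" by (simp only: hd_ident[of i])
  also have "\<dots> \<longleftrightarrow> integrable M (\<lambda>\<omega>. f (hdiff (0,0) \<omega>))" by (rule integrable_distr_eq) auto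
  finally show ?thesis .
qed

lemma hd_int: "integrable M (hdiff i)"
  using hd_same_intgr[of "\<lambda>z. z" i] hd_mean(1) by simp

lemma hd_mean0: "integral\<^sup>L M (hdiff i) = 0"
  using hd_same_int[of "\<lambda>z. z" i] hd_mean(2) by simp

lemma hd_sq_int: "integrable M (\<lambda>\<omega>. (cmod (hdiff i \<omega>))\<^sup>2)"
  using hd_same_intgr[of "\<lambda>z. (cmod z)\<^sup>2" i] hd_var(1) by simp

lemma hd_sq_mean: "integral\<^sup>L M (\<lambda>\<omega>. (cmod (hdiff i \<omega>))\<^sup>2) = 1"
  using hd_same_int[of "\<lambda>z. (cmod z)\<^sup>2" i] hd_var(2) by simp

lemma hv_int: "integrable M (hv i)"
  unfolding hv_def hf_def using hd_int[of i] by simp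

lemma hv_mean: "integral\<^sup>L M (hv i) = complex_of_real a0"
  unfolding hv_def hf_def a0_def using hd_int[of i] hd_mean0[of i] prob_space by simp

lemma sq_aux: "(s::real) \<noteq> 0 \<Longrightarrow> (a + r / s)\<^sup>2 + (i / s)\<^sup>2 = a\<^sup>2 + 2 * a * r / s + (r\<^sup>2 + i\<^sup>2) / s\<^sup>2"
  by (simp add: field_simps power2_eq_square)

lemma cmod_hf_sq: "(cmod (hf z))\<^sup>2 = a0\<^sup>2 + 2 * a0 * Re z / sqrt (K + 1) + (cmod z)\<^sup>2 / (K + 1)"
proof -
  have s: "sqrt (K + 1) > 0" using K by simp
  have "(cmod (hf z))\<^sup>2 = (a0 + Re z / sqrt (K + 1))\<^sup>2 + (Im z / sqrt (K + 1))\<^sup>2"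
    unfolding hf_def a0_def cmod_power2 by (simp add: Re_divide_of_real Im_divide_of_real)
  also have "\<dots> = a0\<^sup>2 + 2 * a0 * Re z / sqrt (K + 1) + ((Re z)\<^sup>2 + (Im z)\<^sup>2) / (sqrt (K + 1))\<^sup>2"
    using s by (intro sq_aux) simp
  also have "\<dots> = a0\<^sup>2 + 2 * a0 * Re z / sqrt (K + 1) + (cmod z)\<^sup>2 / (K + 1)"
    using K by (simp add: cmod_power2)
  finally show ?thesis .
qed

lemma hv_sq_int: "integrable M (\<lambda>\<omega>. (cmod (hv i \<omega>))\<^sup>2)"
  unfolding hv_def cmod_hf_sq using hd_int[of i] hd_sq_int[of i] by simp

lemma hv_sq_mean: "integral\<^sup>L M (\<lambda>\<omega>. (cmod (hv i \<omega>))\<^sup>2) = 1"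
proof -
  have "integral\<^sup>L M (\<lambda>\<omega>. (cmod (hv i \<omega>))\<^sup>2) = a0\<^sup>2 + 2 * a0 * Re (integral\<^sup>L M (hdiff i)) / sqrt (K + 1) + 1 / (K + 1)"
    unfolding hv_def cmod_hf_sq using hd_int[of i] hd_sq_int[of i] hd_sq_mean[of i] prob_space
    by (simp add: Bochner_Integration.integral_add Bochner_Integration.integral_divide)
  also have "\<dots> = 1" using K unfolding hd_mean0 a0_sq by (simp add: field_simps)
  finally show ?thesis .
qed

lemma hv_abs_int: "integrable M (\<lambda>\<omega>. cmod (hv i \<omega>))"
  using hv_sq_int[of i] by (rule square_integrable_imp_integrable[rotated]) simp

lemma hv_same_int:
  fixes f :: "complex \<Rightarrow> 'b::{banach, second_countable_topology}"
  assumes [measurable]: "f \<in> borel_measurable borel"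
  shows "integral\<^sup>L M (\<lambda>\<omega>. f (hv i \<omega>)) = integral\<^sup>L M (\<lambda>\<omega>. f (hv (0,0) \<omega>))"
  unfolding hv_def by (rule hd_same_int) measurable

lemma mu_pos: "integral\<^sup>L M (\<lambda>\<omega>. cmod (hv (0,0) \<omega>)) > 0"
proof -
  have ge: "integral\<^sup>L M (\<lambda>\<omega>. cmod (hv (0,0) \<omega>)) \<ge> 0" by simp
  show ?thesis
  proof (rule ccontr)
    assume "\<not> ?thesis"
    then have "integral\<^sup>L M (\<lambda>\<omega>. cmod (hv (0,0) \<omega>)) = 0" using ge by simp
    then have "AE \<omega> in M. cmod (hv (0,0) \<omega>) = 0"
      using integral_nonneg_eq_0_iff_AE[OF hv_abs_int] by auto
    then have "AE \<omega> in M. (cmod (hv (0,0) \<omega>))\<^sup>2 = 0" by (auto elim: AE_mp)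
    then have "integral\<^sup>L M (\<lambda>\<omega>. (cmod (hv (0,0) \<omega>))\<^sup>2) = integral\<^sup>L M (\<lambda>\<omega>. 0)"
      by (intro integral_cong_AE) auto
    then show False using hv_sq_mean[of "(0,0)"] by simp
  qed
qed

lemma hd_indep_pair:
  assumes "i \<noteq> j"
  shows "indep_var borel (hdiff i) borel (hdiff j)"
proof -
  have "indep_var (PiM {i} (\<lambda>_. borel)) (\<lambda>\<omega>. restrict (\<lambda>k. hdiff k \<omega>) {i})
                  (PiM {j} (\<lambda>_. borel)) (\<lambda>\<omega>. restrict (\<lambda>k. hdiff k \<omega>) {j})"
    by (rule indep_var_restrict[OF hd_indep]) (use assms in auto)
  from indep_var_compose[OF this, of "\<lambda>f. f i" borel "\<lambda>f. f j" borel]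
  show ?thesis by (simp add: comp_def measurable_component_singleton)
qed

lemma Y_indep:
  fixes g :: "complex \<Rightarrow> complex \<Rightarrow> real"
  assumes g[measurable]: "case_prod g \<in> borel_measurable (borel \<Otimes>\<^sub>M borel)" and lk: "l \<noteq> k"
  shows "indep_var borel (\<lambda>\<omega>. g (hv (n,l) \<omega>) (hv (m,l) \<omega>)) borel (\<lambda>\<omega>. g (hv (n,k) \<omega>) (hv (m,k) \<omega>))"
proof -
  define A where "A = {(n,l),(m,l)}"
  define B where "B = {(n,k),(m,k)}"
  have AB: "A \<inter> B = {}" unfolding A_def B_def using lk by auto
  have ind: "indep_var (PiM A (\<lambda>_. borel)) (\<lambda>\<omega>. restrict (\<lambda>i. hdiff i \<omega>) A)
                  (PiM B (\<lambda>_. borel)) (\<lambda>\<omega>. restrict (\<lambda>i. hdiff i \<omega>) B)"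
    by (rule indep_var_restrict[OF hd_indep AB]) auto
  have m1: "(\<lambda>f. g (hf (f (n,l))) (hf (f (m,l)))) \<in> borel_measurable (PiM A (\<lambda>_. borel))"
    unfolding A_def by measurable
  have m2: "(\<lambda>f. g (hf (f (n,k))) (hf (f (m,k)))) \<in> borel_measurable (PiM B (\<lambda>_. borel))"
    unfolding B_def by measurable
  from indep_var_compose[OF ind m1 m2]
  show ?thesis unfolding A_def B_def hv_def by (simp add: comp_def)
qed

lemma Y_ident:
  fixes g :: "complex \<Rightarrow> complex \<Rightarrow> real"
  assumes g[measurable]: "case_prod g \<in> borel_measurable (borel \<Otimes>\<^sub>M borel)"
  shows "distr M borel (\<lambda>\<omega>. g (hv (n,l) \<omega>) (hv (m,l) \<omega>)) = distr M borel (\<lambda>\<omega>. g (hv (n,0) \<omega>) (hv (m,0) \<omega>))"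
proof -
  have pair: "distr M (borel \<Otimes>\<^sub>M borel) (\<lambda>\<omega>. (hdiff (n,l) \<omega>, hdiff (m,l) \<omega>)) =
              distr M (borel \<Otimes>\<^sub>M borel) (\<lambda>\<omega>. (hdiff (n,0) \<omega>, hdiff (m,0) \<omega>))" (is "?L = ?R")
  proof (cases "n = m")
    case True
    have "?L = distr (distr M borel (hdiff (n,l))) (borel \<Otimes>\<^sub>M borel) (\<lambda>z. (z, z))"
      using True by (subst distr_distr) (auto simp: comp_def)
    also have "\<dots> = distr (distr M borel (hdiff (0,0))) (borel \<Otimes>\<^sub>M borel) (\<lambda>z. (z, z))"
      by (simp only: hd_ident[of "(n,l)"])
    also have "\<dots> = distr (distr M borel (hdiff (n,0))) (borel \<Otimes>\<^sub>M borel) (\<lambda>z. (z, z))"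
      by (simp only: hd_ident[of "(n,0)"])
    also have "\<dots> = ?R"
      using True by (subst distr_distr) (auto simp: comp_def)
    finally show ?thesis .
  next
    case False
    have "?L = distr M borel (hdiff (n,l)) \<Otimes>\<^sub>M distr M borel (hdiff (m,l))"
      using indep_var_distribution_eq[THEN iffD1, OF hd_indep_pair[of "(n,l)" "(m,l)"]] False by simp
    also have "\<dots> = distr M borel (hdiff (0,0)) \<Otimes>\<^sub>M distr M borel (hdiff (0,0))"
      by (simp only: hd_ident[of "(n,l)"] hd_ident[of "(m,l)"])
    also have "\<dots> = distr M borel (hdiff (n,0)) \<Otimes>\<^sub>M distr M borel (hdiff (m,0))"
      by (simp only: hd_ident[of "(n,0)"] hd_ident[of "(m,0)"])
    also have "\<dots> = ?R"
      using indep_var_distribution_eq[THEN iffD1, OF hd_indep_pair[of "(n,0)" "(m,0)"]] False by simp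
    finally show ?thesis .
  qed
  have "distr M borel (\<lambda>\<omega>. g (hv (n,l) \<omega>) (hv (m,l) \<omega>)) =
        distr ?L borel (\<lambda>p. g (hf (fst p)) (hf (snd p)))"
    unfolding hv_def by (subst distr_distr) (auto simp: comp_def)
  also have "\<dots> = distr ?R borel (\<lambda>p. g (hf (fst p)) (hf (snd p)))" by (simp only: pair)
  also have "\<dots> = distr M borel (\<lambda>\<omega>. g (hv (n,0) \<omega>) (hv (m,0) \<omega>))"
    unfolding hv_def by (subst distr_distr) (auto simp: comp_def)
  finally show ?thesis .
qed

lemma diag_lim:
  assumes eps: "\<epsilon> > 0"
  shows "(\<lambda>L. prob {\<omega>\<in>space M. (\<Sum>l<L. (cmod (hv (n,l) \<omega>))\<^sup>2) / real L > 1 + \<epsilon>}) \<longlonglongrightarrow> 0"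
proof -
  define Y where "Y l \<omega> = (cmod (hv (n,l) \<omega>))\<^sup>2" for l \<omega>
  have g: "case_prod (\<lambda>x (y::complex). (cmod x)\<^sup>2) \<in> borel_measurable (borel \<Otimes>\<^sub>M borel)" by measurable
  have "(\<lambda>L. prob {\<omega>\<in>space M. (\<Sum>l<L. Y l \<omega>) / real L > expectation (Y 0) + \<epsilon>}) \<longlonglongrightarrow> 0"
  proof (rule wlln1_upper)
    show "random_variable borel (Y l)" for l unfolding Y_def by measurable
    show "distr M borel (Y l) = distr M borel (Y 0)" for l
      unfolding Y_def using Y_ident[OF g, where n=n and l=l] by simp
    show "indep_var borel (Y l) borel (Y k)" if "l \<noteq> k" for l k
      unfolding Y_def using Y_indep[OF g that, where n=n] by simp
    show "0 \<le> Y l \<omega>" for l \<omega> unfolding Y_def by simp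
    show "integrable M (Y 0)" unfolding Y_def by (rule hv_sq_int)
  qed (rule eps)
  moreover have "expectation (Y 0) = 1" unfolding Y_def by (rule hv_sq_mean)
  ultimately show ?thesis unfolding Y_def by simp
qed

lemma abs_lim:
  assumes eps: "\<epsilon> > 0"
  shows "(\<lambda>L. prob {\<omega>\<in>space M. \<epsilon> \<le> \<bar>(\<Sum>l<L. cmod (hv (n,l) \<omega>)) / real L - integral\<^sup>L M (\<lambda>\<omega>. cmod (hv (0,0) \<omega>))\<bar>}) \<longlonglongrightarrow> 0"
proof -
  define Y where "Y l \<omega> = cmod (hv (n,l) \<omega>)" for l \<omega>
  have g: "case_prod (\<lambda>x (y::complex). cmod x) \<in> borel_measurable (borel \<Otimes>\<^sub>M borel)" by measurable
  have "(\<lambda>L. prob {\<omega>\<in>space M. \<epsilon> \<le> \<bar>(\<Sum>l<L. Y l \<omega>) / real L - expectation (Y 0)\<bar>}) \<longlonglongrightarrow> 0"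
  proof (rule wlln2)
    show "random_variable borel (Y l)" for l unfolding Y_def by measurable
    show "distr M borel (Y l) = distr M borel (Y 0)" for l
      unfolding Y_def using Y_ident[OF g, where n=n and l=l] by simp
    show "indep_var borel (Y l) borel (Y k)" if "l \<noteq> k" for l k
      unfolding Y_def using Y_indep[OF g that, where n=n] by simp
    show "integrable M (\<lambda>\<omega>. (Y 0 \<omega>)\<^sup>2)" unfolding Y_def by (rule hv_sq_int)
  qed (rule eps)
  moreover have "expectation (Y 0) = integral\<^sup>L M (\<lambda>\<omega>. cmod (hv (0,0) \<omega>))"
    unfolding Y_def by (rule hv_same_int) measurable
  ultimately show ?thesis unfolding Y_def by simp
qed

lemma hv_indep_pair:
  assumes "i \<noteq> j" and [measurable]: "f1 \<in> borel_measurable borel" "f2 \<in> borel_measurable borel"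
  shows "indep_var borel (\<lambda>\<omega>. f1 (hv i \<omega>)) borel (\<lambda>\<omega>. f2 (hv j \<omega>))"
  using indep_var_compose[OF hd_indep_pair[OF assms(1)], of "\<lambda>z. f1 (hf z)" borel "\<lambda>z. f2 (hf z)" borel]
  unfolding hv_def comp_def by simp

lemma cross_mean:
  assumes nm: "n \<noteq> m"
  shows "integrable M (\<lambda>\<omega>. cnj (hv (n,0) \<omega>) * hv (m,0) \<omega>)"
    and "integral\<^sup>L M (\<lambda>\<omega>. cnj (hv (n,0) \<omega>) * hv (m,0) \<omega>) = complex_of_real (a0\<^sup>2)"
proof -
  have ind: "indep_var borel (\<lambda>\<omega>. cnj (hv (n,0) \<omega>)) borel (\<lambda>\<omega>. hv (m,0) \<omega>)"
    using nm by (intro hv_indep_pair) auto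
  have i1: "integrable M (\<lambda>\<omega>. cnj (hv (n,0) \<omega>))" using hv_int[of "(n,0)"] by simp
  have i2: "integrable M (\<lambda>\<omega>. hv (m,0) \<omega>)" using hv_int[of "(m,0)"] by simp
  show "integrable M (\<lambda>\<omega>. cnj (hv (n,0) \<omega>) * hv (m,0) \<omega>)"
    by (rule indep_var_integrable[OF ind i1 i2])
  show "integral\<^sup>L M (\<lambda>\<omega>. cnj (hv (n,0) \<omega>) * hv (m,0) \<omega>) = complex_of_real (a0\<^sup>2)"
    using indep_var_lebesgue_integral[OF ind i1 i2] hv_mean[of "(n,0)"] hv_mean[of "(m,0)"]
    by (simp add: power2_eq_square)
qed

lemma cross_sq_int:
  assumes nm: "n \<noteq> m"
  shows "integrable M (\<lambda>\<omega>. (cmod (hv (n,0) \<omega>))\<^sup>2 * (cmod (hv (m,0) \<omega>))\<^sup>2)"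
proof -
  have ind: "indep_var borel (\<lambda>\<omega>. (cmod (hv (n,0) \<omega>))\<^sup>2) borel (\<lambda>\<omega>. (cmod (hv (m,0) \<omega>))\<^sup>2)"
    using nm by (intro hv_indep_pair) auto
  show ?thesis by (rule indep_var_integrable[OF ind hv_sq_int hv_sq_int])
qed

lemma cross_lim:
  assumes nm: "n \<noteq> m" and eps: "\<epsilon> > 0"
    and f: "f = Re \<or> f = Im" and c: "c = (if f = Re then a0\<^sup>2 else 0)"
  shows "(\<lambda>L. prob {\<omega>\<in>space M. \<epsilon> \<le> \<bar>(\<Sum>l<L. f (cnj (hv (n,l) \<omega>) * hv (m,l) \<omega>)) / real L - c\<bar>}) \<longlonglongrightarrow> 0"
proof -
  have fm[measurable]: "f \<in> borel_measurable borel" using f by auto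
  have fb: "\<bar>f z\<bar> \<le> cmod z" for z using f abs_Re_le_cmod abs_Im_le_cmod by auto
  define Y where "Y l \<omega> = f (cnj (hv (n,l) \<omega>) * hv (m,l) \<omega>)" for l \<omega>
  have g: "case_prod (\<lambda>x y. f (cnj x * y)) \<in> borel_measurable (borel \<Otimes>\<^sub>M borel)" by measurable
  have "(\<lambda>L. prob {\<omega>\<in>space M. \<epsilon> \<le> \<bar>(\<Sum>l<L. Y l \<omega>) / real L - expectation (Y 0)\<bar>}) \<longlonglongrightarrow> 0"
  proof (rule wlln2)
    show "random_variable borel (Y l)" for l unfolding Y_def by measurable
    show "distr M borel (Y l) = distr M borel (Y 0)" for l
      unfolding Y_def using Y_ident[OF g, where n=n and l=l and m=m] by simp
    show "indep_var borel (Y l) borel (Y k)" if "l \<noteq> k" for l k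
      unfolding Y_def using Y_indep[OF g that, where n=n and m=m] by simp
    show "integrable M (\<lambda>\<omega>. (Y 0 \<omega>)\<^sup>2)"
    proof (rule Bochner_Integration.integrable_bound[OF cross_sq_int[OF nm]])
      show "(\<lambda>\<omega>. (Y 0 \<omega>)\<^sup>2) \<in> borel_measurable M" unfolding Y_def by measurable
      show "AE \<omega> in M. norm ((Y 0 \<omega>)\<^sup>2) \<le> norm ((cmod (hv (n,0) \<omega>))\<^sup>2 * (cmod (hv (m,0) \<omega>))\<^sup>2)"
      proof (rule AE_I2)
        fix \<omega>
        have "\<bar>Y 0 \<omega>\<bar> \<le> cmod (hv (n,0) \<omega>) * cmod (hv (m,0) \<omega>)"
          unfolding Y_def using fb[of "cnj (hv (n,0) \<omega>) * hv (m,0) \<omega>"] by (simp add: norm_mult)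
        then have "(Y 0 \<omega>)\<^sup>2 \<le> (cmod (hv (n,0) \<omega>) * cmod (hv (m,0) \<omega>))\<^sup>2"
          by (metis abs_ge_zero power2_abs power_mono)
        then show "norm ((Y 0 \<omega>)\<^sup>2) \<le> norm ((cmod (hv (n,0) \<omega>))\<^sup>2 * (cmod (hv (m,0) \<omega>))\<^sup>2)"
          by (simp add: power_mult_distrib)
      qed
    qed
  qed (rule eps)
  moreover have "expectation (Y 0) = c"
  proof -
    have "expectation (Y 0) = f (integral\<^sup>L M (\<lambda>\<omega>. cnj (hv (n,0) \<omega>) * hv (m,0) \<omega>))"
      using f
    proof
      assume "f = Re" then show ?thesis
        unfolding Y_def using integral_Re[OF cross_mean(1)[OF nm]] by (simp only:)
    next
      assume "f = Im" then show ?thesis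
        unfolding Y_def using integral_Im[OF cross_mean(1)[OF nm]] by (simp only:)
    qed
    also have "\<dots> = c" unfolding cross_mean(2)[OF nm] c using f by auto
    finally show ?thesis .
  qed
  ultimately show ?thesis unfolding Y_def by simp
qed

end



lemma (in prob_space) tendsto_bad:
  assumes "\<And>L. L > 0 \<Longrightarrow> A L \<subseteq> B L" "\<And>L. B L \<in> sets M" "(\<lambda>L. prob (B L)) \<longlonglongrightarrow> 0"
  shows "(\<lambda>L. prob (A L)) \<longlonglongrightarrow> 0"
proof (rule tendsto_sandwich[OF _ _ tendsto_const assms(3)])
  show "\<forall>\<^sub>F L in sequentially. 0 \<le> prob (A L)" by simp
  show "\<forall>\<^sub>F L in sequentially. prob (A L) \<le> prob (B L)"
    using eventually_gt_at_top[of "0::nat"]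
    by (rule eventually_mono) (intro finite_measure_mono assms)
qed

lemma (in prob_space) union_bad:
  assumes I: "finite I" and S: "\<And>i L. i \<in> I \<Longrightarrow> B i L \<in> sets M"
    and T: "\<And>i. i \<in> I \<Longrightarrow> (\<lambda>L. prob (B i L)) \<longlonglongrightarrow> 0"
  shows "(\<lambda>L. prob (\<Union>i\<in>I. B i L)) \<longlonglongrightarrow> 0"
proof (rule tendsto_sandwich[OF _ _ tendsto_const])
  show "\<forall>\<^sub>F L in sequentially. 0 \<le> prob (\<Union>i\<in>I. B i L)" by simp
  show "\<forall>\<^sub>F L in sequentially. prob (\<Union>i\<in>I. B i L) \<le> (\<Sum>i\<in>I. prob (B i L))"
    using I S by (intro always_eventually allI measure_UNION_le) auto
  show "(\<lambda>L. \<Sum>i\<in>I. prob (B i L)) \<longlonglongrightarrow> 0"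
    using tendsto_sum[of I "\<lambda>i L. prob (B i L)" "\<lambda>_. 0" sequentially] T by simp
qed

lemma (in prob_space) union2_bad:
  assumes "\<And>L. A L \<in> sets M" "\<And>L. B L \<in> sets M"
    "(\<lambda>L. prob (A L)) \<longlonglongrightarrow> 0" "(\<lambda>L. prob (B L)) \<longlonglongrightarrow> 0"
  shows "(\<lambda>L. prob (A L \<union> B L)) \<longlonglongrightarrow> 0"
proof (rule tendsto_sandwich[OF _ _ tendsto_const])
  show "\<forall>\<^sub>F L in sequentially. 0 \<le> prob (A L \<union> B L)" by simp
  show "\<forall>\<^sub>F L in sequentially. prob (A L \<union> B L) \<le> prob (A L) + prob (B L)"
    using assms by (intro always_eventually allI measure_Un_le) auto
  show "(\<lambda>L. prob (A L) + prob (B L)) \<longlonglongrightarrow> 0"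
    using tendsto_add[OF assms(3,4)] by simp
qed

lemma abs_aux: "\<bar>(x::real) - a\<bar> < e \<Longrightarrow> 0 \<le> a \<Longrightarrow> \<bar>x\<bar> \<le> a + e"
  by (auto simp: abs_less_iff abs_le_iff)

lemma div_aux: "0 < (L::real) \<Longrightarrow> \<bar>S / L\<bar> \<le> c \<Longrightarrow> \<bar>S\<bar> \<le> L * c"
  by (simp add: abs_divide pos_divide_le_eq mult.commute)

lemma cmod_le_Re_Im: "cmod z \<le> \<bar>Re z\<bar> + \<bar>Im z\<bar>"
  using cmod_le by simp

context chan
begin

definition Lam :: "real \<Rightarrow> real \<Rightarrow> real \<Rightarrow> real \<Rightarrow> nat \<Rightarrow> nat \<Rightarrow> 'a \<Rightarrow> real" where
  "Lam th se sn P n L \<omega> = (th\<^sup>2 / 8) * (1 / real L) * csis_opt_value n L se sn P (\<lambda>a b. hv (a,b) \<omega>)"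

lemma Lam_nonneg:
  assumes se: "se > 0" and sn: "sn > 0" and P: "P \<ge> 0"
  shows "Lam th se sn P n L \<omega> \<ge> 0"
proof (cases "L = 0")
  case False then show ?thesis unfolding Lam_def using opt_nonneg[OF se sn _ P] by simp
qed (simp add: Lam_def)

lemma E_nonneg:
  assumes se: "se > 0" and sn: "sn > 0" and P: "P \<ge> 0"
    and conv: "conv_in_prob M (Lam th se sn P n) E"
  shows "E \<ge> 0"
proof (rule conv_lower[OF prob_space_axioms conv, of "\<lambda>_. 0"])
  show "((\<lambda>_. 0::real) \<longlongrightarrow> 0) (at_right 0)" by simp
  fix \<delta> :: real
  have e: "{\<omega> \<in> space M. Lam th se sn P n L \<omega> < 0} = {}" for L
    using Lam_nonneg[OF se sn P] by (auto simp: not_less)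
  show "(\<lambda>L. prob {\<omega> \<in> space M. Lam th se sn P n L \<omega> < 0}) \<longlonglongrightarrow> 0" unfolding e by simp
qed

lemma E_Nz:
  assumes se: "se > 0" and sn: "sn > 0" and P: "P \<ge> 0"
    and conv: "conv_in_prob M (Lam th se sn P N) E"
  shows "E \<le> th\<^sup>2 / 8 * (P * real N / (se * (P * real N) + sn))"
proof -
  define F where "F \<delta> = th\<^sup>2 / 8 * (P * (real N * (1 + \<delta>)) / (se * (P * (real N * (1 + \<delta>))) + sn))" for \<delta>
  have "se * (P * (real N * (1 + 0))) + sn > 0" using se sn P by (intro add_nonneg_pos mult_nonneg_nonneg) auto
  then have d0: "se * (P * (real N * (1 + 0))) + sn \<noteq> 0" by linarith
  have "(F \<longlongrightarrow> th\<^sup>2 / 8 * (P * (real N * (1 + 0)) / (se * (P * (real N * (1 + 0))) + sn))) (at_right 0)"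
    unfolding F_def using d0 by (intro tendsto_intros) auto
  then have Flim: "(F \<longlongrightarrow> th\<^sup>2 / 8 * (P * real N / (se * (P * real N) + sn))) (at_right 0)" by simp
  show ?thesis
  proof (rule conv_upper[OF prob_space_axioms conv Flim])
    fix \<delta> :: real assume d: "\<delta> > 0"
    define B where "B n L = {\<omega>\<in>space M. (\<Sum>l<L. (cmod (hv (n,l) \<omega>))\<^sup>2) / real L > 1 + \<delta>}" for n L
    have Bs: "B n L \<in> sets M" for n L unfolding B_def by measurable
    have sub: "{\<omega> \<in> space M. F \<delta> < Lam th se sn P N L \<omega>} \<subseteq> (\<Union>n\<in>{..<N}. B n L)" if L: "L > 0" for L
    proof
      fix \<omega> assume w: "\<omega> \<in> {\<omega> \<in> space M. F \<delta> < Lam th se sn P N L \<omega>}"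
      show "\<omega> \<in> (\<Union>n\<in>{..<N}. B n L)"
      proof (rule ccontr)
        assume "\<omega> \<notin> (\<Union>n\<in>{..<N}. B n L)"
        then have g: "(\<Sum>l<L. (cmod (hv (n,l) \<omega>))\<^sup>2) \<le> real L * (1 + \<delta>)" if "n < N" for n
          using w that L unfolding B_def by (auto simp: not_less divide_le_eq mult_ac)
        have "(\<Sum>n<N. \<Sum>l<L. (cmod (hv (n,l) \<omega>))\<^sup>2) \<le> (\<Sum>n<N. real L * (1 + \<delta>))"
          by (intro sum_mono g) auto
        also have "\<dots> = real L * (real N * (1 + \<delta>))" by simp
        finally have "(\<Sum>n<N. \<Sum>l<L. (cmod (hv (n,l) \<omega>))\<^sup>2) \<le> real L * (real N * (1 + \<delta>))" .
        from Nz_bound_det[OF se sn L P _ this] d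
        have "csis_opt_value N L se sn P (\<lambda>a b. hv (a,b) \<omega>) / real L \<le> P * (real N * (1 + \<delta>)) / (se * (P * (real N * (1 + \<delta>))) + sn)"
          by simp
        then have "th\<^sup>2 / 8 * (csis_opt_value N L se sn P (\<lambda>a b. hv (a,b) \<omega>) / real L) \<le> F \<delta>"
          unfolding F_def by (intro mult_left_mono) auto
        moreover have "Lam th se sn P N L \<omega> = th\<^sup>2 / 8 * (csis_opt_value N L se sn P (\<lambda>a b. hv (a,b) \<omega>) / real L)"
          unfolding Lam_def by simp
        ultimately have "Lam th se sn P N L \<omega> \<le> F \<delta>" by simp
        with w show False by simp
      qed
    qed
    show "(\<lambda>L. prob {\<omega> \<in> space M. F \<delta> < Lam th se sn P N L \<omega>}) \<longlonglongrightarrow> 0"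
    proof (rule tendsto_bad[OF sub])
      show "(\<Union>n\<in>{..<N}. B n L) \<in> sets M" for L using Bs by auto
      show "(\<lambda>L. prob (\<Union>n\<in>{..<N}. B n L)) \<longlonglongrightarrow> 0"
        by (rule union_bad) (use Bs diag_lim[OF \<open>\<delta> > 0\<close>] in \<open>auto simp: B_def\<close>)
    qed
  qed
qed

lemma Im_ne_Re: "Im \<noteq> Re"
proof
  assume "Im = Re" then have "Im \<i> = Re \<i>" by simp
  then show False by simp
qed

lemma E_K:
  assumes se: "se > 0" and sn: "sn > 0" and P: "P \<ge> 0"
    and conv: "conv_in_prob M (Lam th se sn P N) E"
  shows "E \<le> th\<^sup>2 / 8 * (P * (real N * a0\<^sup>2 + (1 - a0\<^sup>2)) / sn)"
proof -
  define F where "F \<delta> = th\<^sup>2 / 8 * (P * (real N * (a0\<^sup>2 + \<delta>) + (1 - a0\<^sup>2)) / sn)" for \<delta>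
  have "(F \<longlongrightarrow> th\<^sup>2 / 8 * (P * (real N * (a0\<^sup>2 + 0) + (1 - a0\<^sup>2)) / sn)) (at_right 0)"
    unfolding F_def using sn by (intro tendsto_intros) auto
  then have Flim: "(F \<longlongrightarrow> th\<^sup>2 / 8 * (P * (real N * a0\<^sup>2 + (1 - a0\<^sup>2)) / sn)) (at_right 0)" by simp
  show ?thesis
  proof (rule conv_upper[OF prob_space_axioms conv Flim])
    fix \<delta> :: real assume d: "\<delta> > 0"
    define B1 where "B1 n L = {\<omega>\<in>space M. (\<Sum>l<L. (cmod (hv (n,l) \<omega>))\<^sup>2) / real L > 1 + \<delta>}" for n L
    define BR where "BR p L = {\<omega>\<in>space M. \<delta> / 2 \<le> \<bar>(\<Sum>l<L. Re (cnj (hv (fst p,l) \<omega>) * hv (snd p,l) \<omega>)) / real L - a0\<^sup>2\<bar>}" for p L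
    define BI where "BI p L = {\<omega>\<in>space M. \<delta> / 2 \<le> \<bar>(\<Sum>l<L. Im (cnj (hv (fst p,l) \<omega>) * hv (snd p,l) \<omega>)) / real L - 0\<bar>}" for p L
    define Off where "Off = {p :: nat \<times> nat. fst p < N \<and> snd p < N \<and> fst p \<noteq> snd p}"
    have fin: "finite Off"
    proof (rule finite_subset)
      show "Off \<subseteq> {..<N} \<times> {..<N}" unfolding Off_def by auto
    qed auto
    have B1s: "B1 n L \<in> sets M" for n L unfolding B1_def by measurable
    have BRs: "BR p L \<in> sets M" for p L unfolding BR_def by measurable
    have BIs: "BI p L \<in> sets M" for p L unfolding BI_def by measurable
    define Bad where "Bad L = (\<Union>n\<in>{..<N}. B1 n L) \<union> ((\<Union>p\<in>Off. BR p L) \<union> (\<Union>p\<in>Off. BI p L))" for L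
    have sub: "{\<omega> \<in> space M. F \<delta> < Lam th se sn P N L \<omega>} \<subseteq> Bad L" if L: "L > 0" for L
    proof
      fix \<omega> assume w: "\<omega> \<in> {\<omega> \<in> space M. F \<delta> < Lam th se sn P N L \<omega>}"
      show "\<omega> \<in> Bad L"
      proof (rule ccontr)
        assume nb: "\<omega> \<notin> Bad L"
        have Lp: "real L > 0" using L by simp
        have g1: "(\<Sum>l<L. (cmod (hv (n,l) \<omega>))\<^sup>2) \<le> real L * (1 + \<delta>)" if "n < N" for n
          using w nb that Lp unfolding B1_def Bad_def by (auto simp: not_less divide_le_eq mult_ac)
        have gR: "\<bar>(\<Sum>l<L. Re (cnj (hv (n,l) \<omega>) * hv (m,l) \<omega>))\<bar> \<le> real L * (a0\<^sup>2 + \<delta> / 2)"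
          if "n < N" "m < N" "n \<noteq> m" for n m
        proof -
          have "\<bar>(\<Sum>l<L. Re (cnj (hv (n,l) \<omega>) * hv (m,l) \<omega>)) / real L - a0\<^sup>2\<bar> < \<delta> / 2"
            using w nb that unfolding BR_def Bad_def Off_def by (auto simp: not_le)
          then have "\<bar>(\<Sum>l<L. Re (cnj (hv (n,l) \<omega>) * hv (m,l) \<omega>)) / real L\<bar> \<le> a0\<^sup>2 + \<delta> / 2" using zero_le_power2[of a0] by (rule abs_aux)
          then show ?thesis by (rule div_aux[OF Lp])
        qed
        have gI: "\<bar>(\<Sum>l<L. Im (cnj (hv (n,l) \<omega>) * hv (m,l) \<omega>))\<bar> \<le> real L * (\<delta> / 2)"
          if "n < N" "m < N" "n \<noteq> m" for n m
        proof -
          have "\<bar>(\<Sum>l<L. Im (cnj (hv (n,l) \<omega>) * hv (m,l) \<omega>)) / real L - 0\<bar> < \<delta> / 2"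
            using w nb that unfolding BI_def Bad_def Off_def by (auto simp: not_le)
          then have "\<bar>(\<Sum>l<L. Im (cnj (hv (n,l) \<omega>) * hv (m,l) \<omega>)) / real L\<bar> \<le> \<delta> / 2" by simp
          then show ?thesis by (rule div_aux[OF Lp])
        qed
        have G: "cmod (\<Sum>l<L. cnj (hv (n,l) \<omega>) * hv (m,l) \<omega>) \<le> real L * ((a0\<^sup>2 + \<delta>) + (if n = m then 1 - a0\<^sup>2 else 0))"
          if nm: "n < N" "m < N" for n m
        proof (cases "n = m")
          case True
          have "(\<Sum>l<L. cnj (hv (n,l) \<omega>) * hv (n,l) \<omega>) = complex_of_real (\<Sum>l<L. (cmod (hv (n,l) \<omega>))\<^sup>2)"
            by (simp only: of_real_sum cmod_sq_c) (simp add: mult.commute)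
          moreover have "cmod (complex_of_real (\<Sum>l<L. (cmod (hv (n,l) \<omega>))\<^sup>2)) = (\<Sum>l<L. (cmod (hv (n,l) \<omega>))\<^sup>2)"
            by (simp only: norm_of_real) (simp add: sum_nonneg)
          ultimately have "cmod (\<Sum>l<L. cnj (hv (n,l) \<omega>) * hv (n,l) \<omega>) = (\<Sum>l<L. (cmod (hv (n,l) \<omega>))\<^sup>2)"
            by (simp only:)
          then show ?thesis using True g1[OF nm(1)] by (simp add: add.commute)
        next
          case False
          have "cmod (\<Sum>l<L. cnj (hv (n,l) \<omega>) * hv (m,l) \<omega>) \<le>
             \<bar>Re (\<Sum>l<L. cnj (hv (n,l) \<omega>) * hv (m,l) \<omega>)\<bar> + \<bar>Im (\<Sum>l<L. cnj (hv (n,l) \<omega>) * hv (m,l) \<omega>)\<bar>"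
            by (rule cmod_le_Re_Im)
          also have "\<dots> \<le> real L * (a0\<^sup>2 + \<delta> / 2) + real L * (\<delta> / 2)"
            using gR[OF nm False] gI[OF nm False] by (simp add: Re_sum Im_sum)
          finally show ?thesis using False by (simp add: algebra_simps)
        qed
        have "csis_opt_value N L se sn P (\<lambda>a b. hv (a,b) \<omega>) / real L \<le> P * (real N * (a0\<^sup>2 + \<delta>) + (1 - a0\<^sup>2)) / sn"
          by (rule K_bound_det[OF se sn L P _ _ G]) (use d a0_sq_le1 in auto)
        then have "th\<^sup>2 / 8 * (csis_opt_value N L se sn P (\<lambda>a b. hv (a,b) \<omega>) / real L) \<le> F \<delta>"
          unfolding F_def by (intro mult_left_mono) auto
        moreover have "Lam th se sn P N L \<omega> = th\<^sup>2 / 8 * (csis_opt_value N L se sn P (\<lambda>a b. hv (a,b) \<omega>) / real L)"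
          unfolding Lam_def by simp
        ultimately have "Lam th se sn P N L \<omega> \<le> F \<delta>" by simp
        with w show False by simp
      qed
    qed
    show "(\<lambda>L. prob {\<omega> \<in> space M. F \<delta> < Lam th se sn P N L \<omega>}) \<longlonglongrightarrow> 0"
    proof (rule tendsto_bad[OF sub])
      show "Bad L \<in> sets M" for L unfolding Bad_def using B1s BRs BIs fin by auto
      have d2: "\<delta> / 2 > 0" using d by simp
      have l1: "(\<lambda>L. prob (\<Union>n\<in>{..<N}. B1 n L)) \<longlonglongrightarrow> 0"
        by (rule union_bad) (use B1s diag_lim[OF d] in \<open>auto simp: B1_def\<close>)
      have l2: "(\<lambda>L. prob (\<Union>p\<in>Off. BR p L)) \<longlonglongrightarrow> 0"
      proof (rule union_bad[OF fin])
        fix p assume "p \<in> Off"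
        then show "(\<lambda>L. prob (BR p L)) \<longlonglongrightarrow> 0"
          unfolding BR_def Off_def using cross_lim[OF _ d2, of "fst p" "snd p" Re "a0\<^sup>2"] by auto
      qed (rule BRs)
      have l3: "(\<lambda>L. prob (\<Union>p\<in>Off. BI p L)) \<longlonglongrightarrow> 0"
      proof (rule union_bad[OF fin])
        fix p assume "p \<in> Off"
        then show "(\<lambda>L. prob (BI p L)) \<longlonglongrightarrow> 0"
          unfolding BI_def Off_def using cross_lim[OF _ d2, of "fst p" "snd p" Im 0] Im_ne_Re by auto
      qed (rule BIs)
      show "(\<lambda>L. prob (Bad L)) \<longlonglongrightarrow> 0"
        unfolding Bad_def
        by (intro union2_bad l1 l2 l3) (use B1s BRs BIs fin in auto)
    qed
  qed
qed

lemma E_one_lower: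
  assumes se: "se > 0" and sn: "sn > 0" and P: "P \<ge> 0"
    and conv: "conv_in_prob M (Lam th se sn P 1) E"
  shows "th\<^sup>2 / 8 * (P * (integral\<^sup>L M (\<lambda>\<omega>. cmod (hv (0,0) \<omega>)))\<^sup>2 / (se * P + sn)) \<le> E"
proof -
  define \<mu> where "\<mu> = integral\<^sup>L M (\<lambda>\<omega>. cmod (hv (0,0) \<omega>))"
  have mu: "\<mu> > 0" unfolding \<mu>_def by (rule mu_pos)
  define F where "F \<delta> = th\<^sup>2 / 8 * (P * (max 0 (\<mu> - \<delta>))\<^sup>2 / (se * P * (1 + \<delta>) + sn))" for \<delta>
  have "se * P * (1 + 0) + sn > 0" using se sn P by (intro add_nonneg_pos mult_nonneg_nonneg) auto
  then have d0: "se * P * (1 + 0) + sn \<noteq> 0" by linarith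
  have "(F \<longlongrightarrow> th\<^sup>2 / 8 * (P * (max 0 (\<mu> - 0))\<^sup>2 / (se * P * (1 + 0) + sn))) (at_right 0)"
    unfolding F_def using d0 by (intro tendsto_intros) auto
  then have Flim: "(F \<longlongrightarrow> th\<^sup>2 / 8 * (P * \<mu>\<^sup>2 / (se * P + sn))) (at_right 0)" using mu by simp
  show ?thesis unfolding \<mu>_def[symmetric]
  proof (rule conv_lower[OF prob_space_axioms conv Flim])
    fix \<delta> :: real assume d: "\<delta> > 0"
    define BA where "BA L = {\<omega>\<in>space M. \<delta> \<le> \<bar>(\<Sum>l<L. cmod (hv (0,l) \<omega>)) / real L - \<mu>\<bar>}" for L
    define BB where "BB L = {\<omega>\<in>space M. (\<Sum>l<L. (cmod (hv (0,l) \<omega>))\<^sup>2) / real L > 1 + \<delta>}" for L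
    have BAs: "BA L \<in> sets M" for L unfolding BA_def by measurable
    have BBs: "BB L \<in> sets M" for L unfolding BB_def by measurable
    have sub: "{\<omega> \<in> space M. Lam th se sn P 1 L \<omega> < F \<delta>} \<subseteq> BA L \<union> BB L" if L: "L > 0" for L
    proof
      fix \<omega> assume w: "\<omega> \<in> {\<omega> \<in> space M. Lam th se sn P 1 L \<omega> < F \<delta>}"
      show "\<omega> \<in> BA L \<union> BB L"
      proof (rule ccontr)
        assume nb: "\<omega> \<notin> BA L \<union> BB L"
        define A where "A = (\<Sum>l<L. cmod (hv (0,l) \<omega>)) / real L"
        define B where "B = (\<Sum>l<L. (cmod (hv (0,l) \<omega>))\<^sup>2) / real L"
        have A1: "\<bar>A - \<mu>\<bar> < \<delta>" using w nb unfolding A_def BA_def by auto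
        have B1: "B \<le> 1 + \<delta>" using w nb unfolding B_def BB_def by auto
        have A0: "A \<ge> 0" unfolding A_def by (simp add: sum_nonneg)
        have B0: "B \<ge> 0" unfolding B_def by (simp add: sum_nonneg)
        have Am: "max 0 (\<mu> - \<delta>) \<le> A" using A1 A0 by (auto simp: abs_less_iff)
        have "(max 0 (\<mu> - \<delta>))\<^sup>2 \<le> A\<^sup>2" using Am by (intro power_mono) auto
        then have num: "P * (max 0 (\<mu> - \<delta>))\<^sup>2 \<le> P * A\<^sup>2" using P by (rule mult_left_mono)
        have den: "se * P * B + sn \<le> se * P * (1 + \<delta>) + sn" using B1 se P by (simp add: mult_left_mono)
        have denp: "se * P * B + sn > 0" using se sn P B0 by (intro add_nonneg_pos mult_nonneg_nonneg) auto
        have "P * (max 0 (\<mu> - \<delta>))\<^sup>2 / (se * P * (1 + \<delta>) + sn) \<le> P * A\<^sup>2 / (se * P * B + sn)"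
          by (rule frac_le[OF _ num denp den]) (use P in simp)
        also have "\<dots> \<le> csis_opt_value 1 L se sn P (\<lambda>a b. hv (a,b) \<omega>) / real L"
          using opt_N1_lower[OF se sn L P, of "\<lambda>a b. hv (a,b) \<omega>"] unfolding A_def B_def by (simp add: mult.assoc)
        finally have "F \<delta> \<le> th\<^sup>2 / 8 * (csis_opt_value 1 L se sn P (\<lambda>a b. hv (a,b) \<omega>) / real L)"
          unfolding F_def by (intro mult_left_mono) auto
        moreover have "Lam th se sn P 1 L \<omega> = th\<^sup>2 / 8 * (csis_opt_value 1 L se sn P (\<lambda>a b. hv (a,b) \<omega>) / real L)"
          unfolding Lam_def by simp
        ultimately show False using w by simp
      qed
    qed
    show "(\<lambda>L. prob {\<omega> \<in> space M. Lam th se sn P 1 L \<omega> < F \<delta>}) \<longlonglongrightarrow> 0"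
    proof (rule tendsto_bad[OF sub])
      show "BA L \<union> BB L \<in> sets M" for L using BAs BBs by auto
      show "(\<lambda>L. prob (BA L \<union> BB L)) \<longlonglongrightarrow> 0"
      proof (rule union2_bad[OF BAs BBs])
        show "(\<lambda>L. prob (BA L)) \<longlonglongrightarrow> 0" unfolding BA_def \<mu>_def by (rule abs_lim[OF d])
        show "(\<lambda>L. prob (BB L)) \<longlonglongrightarrow> 0" unfolding BB_def by (rule diag_lim[OF d])
      qed
    qed
  qed
qed

end



lemma AW_alg:
  fixes th p1 se sn PT :: real
  assumes den: "p1 * th\<^sup>2 + se > 0" and se: "se > 0" and sn: "sn > 0" and PT: "PT > 0"
  shows "(1 / 8) * ((PT / sn) * (th\<^sup>2 / se) / ((PT / sn) + p1 * (th\<^sup>2 / se) + 1))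
     = th\<^sup>2 / 8 * ((PT / (p1 * th\<^sup>2 + se)) / (se * (PT / (p1 * th\<^sup>2 + se)) + sn))"
proof -
  define D where "D = p1 * th\<^sup>2 + se"
  have D: "D > 0" using den unfolding D_def .
  have d1: "se * PT + sn * D > 0" using se sn PT D by (intro add_pos_pos mult_pos_pos)
  have e1: "se * (PT / D) + sn = (se * PT + sn * D) / D" using D by (simp add: field_simps)
  have f2: "(PT / D) / (se * (PT / D) + sn) = PT / (se * PT + sn * D)"
    unfolding e1 using D d1 by simp
  have f1: "(PT / sn) * (th\<^sup>2 / se) / ((PT / sn) + p1 * (th\<^sup>2 / se) + 1) = th\<^sup>2 * PT / (se * PT + sn * D)"
  proof -
    have e2: "(PT / sn) + p1 * (th\<^sup>2 / se) + 1 = (se * PT + sn * D) / (sn * se)"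
      unfolding D_def using se sn by (simp add: field_simps)
    show ?thesis unfolding e2 using se sn d1 by (simp add: field_simps)
  qed
  show ?thesis unfolding D_def[symmetric] f1 f2 by simp
qed

lemma z_alg:
  fixes th p1 se sn PT :: real
  assumes den: "p1 * th\<^sup>2 + se > 0" and se: "se > 0" and sn: "sn > 0"
  shows "(PT / sn) / (p1 * (th\<^sup>2 / se) + 1) = se * (PT / (p1 * th\<^sup>2 + se)) / sn"
proof -
  have "p1 * (th\<^sup>2 / se) + 1 = (p1 * th\<^sup>2 + se) / se" using se by (simp add: field_simps)
  then show ?thesis using se sn den by (simp add: field_simps)
qed

lemma I3_alg:
  fixes th P se sn :: real and N :: nat
  assumes P: "P > 0" and se: "se > 0" and sn: "sn > 0"
  shows "th\<^sup>2 / 8 * (P * real N / (se * (P * real N) + sn)) = th\<^sup>2 / 8 * (P / (se * P + sn)) * (real N * (se * P / sn + 1) / (real N * (se * P / sn) + 1))"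
proof -
  define u where "u = se * P + sn"
  define v where "v = se * (P * real N) + sn"
  have a: "se * P / sn + 1 = u / sn" unfolding u_def using sn by (simp add: field_simps)
  have b: "real N * (se * P / sn) + 1 = v / sn" unfolding v_def using sn by (simp add: field_simps)
  have p1: "u \<noteq> 0" unfolding u_def using mult_pos_pos[OF se P] sn by linarith
  have p2: "v \<noteq> 0" unfolding v_def using P se sn by (smt (verit) mult_nonneg_nonneg of_nat_0_le_iff)
  show ?thesis unfolding a b v_def[symmetric] u_def[symmetric] using p1 p2 sn by (simp add: field_simps)
qed

lemma I4_alg:
  fixes th P se sn K :: real and N :: nat
  assumes P: "P > 0" and se: "se > 0" and sn: "sn > 0" and K: "K \<ge> 0"
  shows "th\<^sup>2 / 8 * (P * (real N * (K / (K + 1)) + (1 - K / (K + 1))) / sn) = th\<^sup>2 / 8 * (P / (se * P + sn)) * ((se * P / sn + 1) * (real N * K + 1) / (K + 1))"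
proof -
  define u where "u = se * P + sn"
  define k where "k = K + 1"
  have a: "se * P / sn + 1 = u / sn" unfolding u_def using sn by (simp add: field_simps)
  have kk: "real N * (K / (K + 1)) + (1 - K / (K + 1)) = (real N * K + 1) / k" unfolding k_def using K by (simp add: field_simps)
  have p1: "u \<noteq> 0" unfolding u_def using mult_pos_pos[OF se P] sn by linarith
  have k0: "k \<noteq> 0" unfolding k_def using K by simp
  have Kk: "K = k - 1" unfolding k_def by simp
  show ?thesis unfolding a kk u_def[symmetric] k_def[symmetric] using p1 sn k0 by (simp add: field_simps Kk algebra_simps)
qed

theorem theorem2:
  fixes M :: "'a measure"
    and hdiff :: "nat \<times> nat \<Rightarrow> 'a \<Rightarrow> complex"
    and \<theta> p1 s_eta s_nu P_T K :: real
    and N :: nat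
    and E_N E_1 :: real
  assumes M: "prob_space M"
    and theta: "\<theta> > 0" and p1: "0 < p1" "p1 < 1"
    and s_eta: "s_eta > 0" and s_nu: "s_nu > 0" and PT: "P_T > 0"
    and K: "K \<ge> 0" and N: "N \<ge> 1"
    and hd_rv: "\<And>i. hdiff i \<in> borel_measurable M"
    and hd_indep: "prob_space.indep_vars M (\<lambda>_. borel) hdiff UNIV"
    and hd_ident: "\<And>i. distr M borel (hdiff i) = distr M borel (hdiff (0, 0))"
    and hd_mean: "integrable M (hdiff (0, 0))" "integral\<^sup>L M (hdiff (0, 0)) = 0"
    and hd_var: "integrable M (\<lambda>\<omega>. (cmod (hdiff (0, 0) \<omega>))\<^sup>2)"
                "integral\<^sup>L M (\<lambda>\<omega>. (cmod (hdiff (0, 0) \<omega>))\<^sup>2) = 1"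
  defines "z \<equiv> (P_T / s_nu) / (p1 * (\<theta>\<^sup>2 / s_eta) + 1)"
    and "\<zeta> \<equiv> 1 / (integral\<^sup>L M (\<lambda>\<omega>. cmod (complex_of_real (sqrt (K / (K + 1))) + hdiff (0, 0) \<omega> / complex_of_real (sqrt (K + 1)))))\<^sup>2"
    and "E_AWGN \<equiv> (1 / 8) * ((P_T / s_nu) * (\<theta>\<^sup>2 / s_eta) / ((P_T / s_nu) + p1 * (\<theta>\<^sup>2 / s_eta) + 1))"
    and "\<Lambda> \<equiv> \<lambda>n L \<omega>. (\<theta>\<^sup>2 / 8) * (1 / real L) *
                  csis_opt_value n L s_eta s_nu (P_T / (p1 * \<theta>\<^sup>2 + s_eta))
                    (\<lambda>a b. complex_of_real (sqrt (K / (K + 1))) + hdiff (a, b) \<omega> / complex_of_real (sqrt (K + 1)))"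
  assumes E_N: "conv_in_prob M (\<Lambda> N) E_N"
    and E_1: "conv_in_prob M (\<Lambda> 1) E_1"
  shows "E_N / E_1 \<le> \<zeta> * (E_N / E_AWGN)
       \<and> \<zeta> * (E_N / E_AWGN)
           \<le> \<zeta> * min (real N * (z + 1) / (real N * z + 1)) ((z + 1) * (real N * K + 1) / (K + 1))"
proof -
  interpret chan M hdiff K
    by (intro chan.intro chan_axioms.intro M) (use K hd_rv hd_indep hd_ident hd_mean hd_var in auto)
  define P where "P = P_T / (p1 * \<theta>\<^sup>2 + s_eta)"
  define \<mu> where "\<mu> = integral\<^sup>L M (\<lambda>\<omega>. cmod (hv (0,0) \<omega>))"
  have mu: "\<mu> > 0" unfolding \<mu>_def by (rule mu_pos)
  have den: "p1 * \<theta>\<^sup>2 + s_eta > 0" using p1 theta s_eta by (intro add_nonneg_pos) auto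
  have Ppos: "P > 0" unfolding P_def using PT den by simp
  have LamEq: "\<Lambda> = Lam \<theta> s_eta s_nu P"
    unfolding \<Lambda>_def Lam_def P_def hv_def hf_def by (intro ext) simp
  have zeta: "\<zeta> = 1 / \<mu>\<^sup>2"
    unfolding \<zeta>_def \<mu>_def hv_def hf_def by simp
  have EN0: "E_N \<ge> 0"
    using E_nonneg[OF s_eta s_nu _, of P \<theta> N E_N] Ppos E_N unfolding LamEq by simp
  have E1: "\<theta>\<^sup>2 / 8 * (P * \<mu>\<^sup>2 / (s_eta * P + s_nu)) \<le> E_1"
    using E_one_lower[OF s_eta s_nu _, of P \<theta> E_1] Ppos E_1 unfolding LamEq \<mu>_def by simp
  have ENz: "E_N \<le> \<theta>\<^sup>2 / 8 * (P * real N / (s_eta * (P * real N) + s_nu))"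
    using E_Nz[OF s_eta s_nu _, of P \<theta> N E_N] Ppos E_N unfolding LamEq by simp
  have EK: "E_N \<le> \<theta>\<^sup>2 / 8 * (P * (real N * a0\<^sup>2 + (1 - a0\<^sup>2)) / s_nu)"
    using E_K[OF s_eta s_nu _, of P \<theta> N E_N] Ppos E_N unfolding LamEq by simp
  have AW: "E_AWGN = \<theta>\<^sup>2 / 8 * (P / (s_eta * P + s_nu))"
    unfolding E_AWGN_def P_def by (rule AW_alg[OF den s_eta s_nu PT])
  have zP: "z = s_eta * P / s_nu"
    unfolding z_def P_def by (rule z_alg[OF den s_eta s_nu])
  have AWp: "E_AWGN > 0" unfolding AW using theta Ppos s_eta s_nu by (simp add: add_pos_pos)
  have I3: "\<theta>\<^sup>2 / 8 * (P * real N / (s_eta * (P * real N) + s_nu)) = E_AWGN * (real N * (z + 1) / (real N * z + 1))"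
    unfolding AW zP by (rule I3_alg[OF Ppos s_eta s_nu])
  have I4: "\<theta>\<^sup>2 / 8 * (P * (real N * a0\<^sup>2 + (1 - a0\<^sup>2)) / s_nu) = E_AWGN * ((z + 1) * (real N * K + 1) / (K + 1))"
    unfolding AW zP a0_sq by (rule I4_alg[OF Ppos s_eta s_nu K])
  have zeta0: "\<zeta> \<ge> 0" unfolding zeta by simp
  have E1p: "E_1 \<ge> E_AWGN * \<mu>\<^sup>2" using E1 unfolding AW by (simp add: field_simps)
  have E1pos: "E_1 > 0" using E1p AWp mu by (smt (verit) mult_pos_pos zero_less_power)
  have part1: "E_N / E_1 \<le> \<zeta> * (E_N / E_AWGN)"
  proof -
    have "E_N / E_1 \<le> E_N / (E_AWGN * \<mu>\<^sup>2)"
      using EN0 E1p AWp mu E1pos by (intro divide_left_mono) (auto intro!: mult_pos_pos)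
    also have "\<dots> = \<zeta> * (E_N / E_AWGN)" unfolding zeta by (simp add: field_simps)
    finally show ?thesis .
  qed
  have b1: "E_N / E_AWGN \<le> real N * (z + 1) / (real N * z + 1)"
    using ENz AWp unfolding I3 by (simp add: divide_le_eq mult.commute)
  have b2: "E_N / E_AWGN \<le> (z + 1) * (real N * K + 1) / (K + 1)"
    using EK AWp unfolding I4 by (simp add: divide_le_eq mult.commute)
  have part2: "\<zeta> * (E_N / E_AWGN) \<le> \<zeta> * min (real N * (z + 1) / (real N * z + 1)) ((z + 1) * (real N * K + 1) / (K + 1))"
    using b1 b2 zeta0 by (intro mult_left_mono) auto
  show ?thesis using part1 part2 by simp
qed

end
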